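(* Let $n\in\mathbb{N}_0=\{0,1,2,\dots\}$ and let $\varphi:[0,\infty)\to\mathbb{R}$ be continuous such that $x^m\varphi(x)$ is of bounded variation on $[0,\infty)$ for each $m=0,1,\dots,n$. Suppose $\varphi(x)=o(x^{-n})$ as $x\to\infty$ and $x^n\varphi(x)\in L_1(0,\infty)$. Let $\Phi(t)=\int_0^\infty e^{ixt}\,d\varphi(x)$. Then $\Phi$ is $n$ times differentiable on $\mathbb{R}_+$, its $n$-th derivative is $$\Phi^{(n)}(t)=\int_0^\infty (ix)^n e^{itx}\,d\varphi(x),$$ and $\Phi^{(n)}(t)\to 0$ as $|t|\to\infty$ if and only if the integral $$\Psi_n(t)=\int_0^\infty e^{itx}\,d\bigl(x^n\varphi(x)\bigr)$$ has a limit as $|t|\to\infty$. *)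

theory Defs
  imports "HOL-Analysis.Analysis" "HOL-Library.Landau_Symbols"
begin

definition bounded_variation_on :: "real set \<Rightarrow> (real \<Rightarrow> real) \<Rightarrow> bool" where
  "bounded_variation_on S f \<longleftrightarrow>
     (\<exists>B. \<forall>(k::nat) (x::nat \<Rightarrow> real).
        (\<forall>i\<le>k. x i \<in> S) \<and> (\<forall>i<k. x i < x (Suc i)) \<longrightarrow>
        (\<Sum>i<k. \<bar>f (x (Suc i)) - f (x i)\<bar>) \<le> B)"

definition has_RS_integral ::
  "(real \<Rightarrow> complex) \<Rightarrow> (real \<Rightarrow> real) \<Rightarrow> real \<Rightarrow> real \<Rightarrow> complex \<Rightarrow> bool" where
  "has_RS_integral f g a b I \<longleftrightarrow>
     (\<forall>\<epsilon>>0. \<exists>\<delta>>0. \<forall>(k::nat) (x::nat \<Rightarrow> real) (\<xi>::nat \<Rightarrow> real).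
        x 0 = a \<and> x k = b \<and>
        (\<forall>i<k. x i < x (Suc i) \<and> x (Suc i) - x i < \<delta> \<and> x i \<le> \<xi> i \<and> \<xi> i \<le> x (Suc i))
        \<longrightarrow> norm ((\<Sum>i<k. f (\<xi> i) * of_real (g (x (Suc i)) - g (x i))) - I) < \<epsilon>)"

definition RS_integral :: "(real \<Rightarrow> complex) \<Rightarrow> (real \<Rightarrow> real) \<Rightarrow> real \<Rightarrow> real \<Rightarrow> complex" where
  "RS_integral f g a b = (THE I. has_RS_integral f g a b I)"

definition RS_integral_0_inf :: "(real \<Rightarrow> complex) \<Rightarrow> (real \<Rightarrow> real) \<Rightarrow> complex" where
  "RS_integral_0_inf f g = Lim at_top (\<lambda>b. RS_integral f g 0 b)"

end

theory Submission
  imports Defs "HOL-Probability.Characteristic_Functions" "HOL-Probability.Sinc_Integral"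
begin


lemma chain_mono:
  assumes "\<forall>i<k. (x::nat\<Rightarrow>real) i < x (Suc i)" "i \<le> j" "j \<le> k"
  shows "x i \<le> x j"
  using assms(2,3)
proof (induction j)
  case 0 then show ?case by simp
next
  case (Suc j)
  show ?case
  proof (cases "i = Suc j")
    case True then show ?thesis by simp
  next
    case False
    then have "i \<le> j" using Suc.prems by simp
    then have "x i \<le> x j" using Suc by simp
    also have "x j < x (Suc j)" using assms(1) Suc.prems by simp
    finally show ?thesis by simp
  qed
qed

lemma fine_partition:
  fixes a b \<delta> :: real
  assumes "a < b" "\<delta> > 0"
  obtains k x where "x 0 = a" "x k = b" "\<forall>i<k. x i < x (Suc i) \<and> x (Suc i) - x i < \<delta>"
proof -
  obtain k :: nat where k: "(b - a) / \<delta> < k" using reals_Archimedean2 by blast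
  have "(b - a) / \<delta> > 0" using assms by simp
  then have kpos: "k > 0" using k by linarith
  define x where "x i = a + (b - a) * real i / real k" for i
  have x0: "x 0 = a" by (simp add: x_def)
  have xk: "x k = b" using kpos by (simp add: x_def)
  have "x i < x (Suc i) \<and> x (Suc i) - x i < \<delta>" for i
  proof -
    have d: "x (Suc i) - x i = (b - a) / k" unfolding x_def by (simp add: diff_divide_distrib[symmetric] algebra_simps)
    have "(b-a)/k > 0" using assms kpos by simp
    moreover have "b - a < k * \<delta>" using k assms by (simp add: field_simps)
    then have "(b-a)/k < \<delta>" using kpos by (simp add: field_simps)
    ultimately show ?thesis using d by linarith
  qed
  then have "\<forall>i<k. x i < x (Suc i) \<and> x (Suc i) - x i < \<delta>" by blast
  then show ?thesis by (rule that[OF x0 xk])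
qed

lemma RS_unique:
  assumes ab: "a < b" and I: "has_RS_integral f g a b I" and J: "has_RS_integral f g a b J"
  shows "I = J"
proof (rule ccontr)
  assume ne: "I \<noteq> J"
  define e where "e = norm (I - J) / 2"
  have e: "e > 0" using ne by (simp add: e_def)
  obtain d1 where d1: "d1 > 0" "\<And>k x \<xi>. x 0 = a \<and> x k = b \<and> (\<forall>i<k. x i < x (Suc i) \<and> x (Suc i) - x i < d1 \<and> x i \<le> \<xi> i \<and> \<xi> i \<le> x (Suc i)) \<Longrightarrow> norm ((\<Sum>i<k. f (\<xi> i) * of_real (g (x (Suc i)) - g (x i))) - I) < e"
    using I e unfolding has_RS_integral_def by meson
  obtain d2 where d2: "d2 > 0" "\<And>k x \<xi>. x 0 = a \<and> x k = b \<and> (\<forall>i<k. x i < x (Suc i) \<and> x (Suc i) - x i < d2 \<and> x i \<le> \<xi> i \<and> \<xi> i \<le> x (Suc i)) \<Longrightarrow> norm ((\<Sum>i<k. f (\<xi> i) * of_real (g (x (Suc i)) - g (x i))) - J) < e"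
    using J e unfolding has_RS_integral_def by meson
  obtain k x where x: "x 0 = a" "x k = b" "\<forall>i<k. x i < x (Suc i) \<and> x (Suc i) - x i < min d1 d2"
    using fine_partition[OF ab, of "min d1 d2"] d1 d2 by (metis min_less_iff_conj)
  define S where "S = (\<Sum>i<k. f (x i) * of_real (g (x (Suc i)) - g (x i)))"
  have 1: "norm (S - I) < e" unfolding S_def by (rule d1(2)) (use x in auto)
  have 2: "norm (S - J) < e" unfolding S_def by (rule d2(2)) (use x in auto)
  have "I - J = (S - J) - (S - I)" by simp
  then have "norm (I - J) \<le> norm (S - J) + norm (S - I)" by (metis norm_triangle_ineq4)
  then have "norm (I - J) < 2 * e" using 1 2 by linarith
  then show False by (simp add: e_def)
qed

lemma RS_integral_eqI:
  assumes "a < b" "has_RS_integral f g a b I"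
  shows "RS_integral f g a b = I"
  unfolding RS_integral_def using RS_unique[OF assms(1)] assms(2) by blast

lemma RS_bound:
  assumes ab: "a < b" and I: "has_RS_integral f g a b I"
    and f1: "\<And>x. x \<in> {a..b} \<Longrightarrow> norm (f x) \<le> 1"
    and var: "\<And>k x. (\<forall>i\<le>k. x i \<in> {a..b}) \<Longrightarrow> (\<forall>i<k. x i < x (Suc i)) \<Longrightarrow> (\<Sum>i<k. \<bar>g (x (Suc i)) - g (x i)\<bar>) \<le> B"
  shows "norm I \<le> B"
proof (rule field_le_epsilon)
  fix e :: real assume e: "e > 0"
  obtain d1 where d1: "d1 > 0" "\<And>k x \<xi>. x 0 = a \<and> x k = b \<and> (\<forall>i<k. x i < x (Suc i) \<and> x (Suc i) - x i < d1 \<and> x i \<le> \<xi> i \<and> \<xi> i \<le> x (Suc i)) \<Longrightarrow> norm ((\<Sum>i<k. f (\<xi> i) * of_real (g (x (Suc i)) - g (x i))) - I) < e"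
    using I e unfolding has_RS_integral_def by meson
  obtain k x where x: "x 0 = a" "x k = b" "\<forall>i<k. x i < x (Suc i) \<and> x (Suc i) - x i < d1"
    using fine_partition[OF ab d1(1)] by metis
  define S where "S = (\<Sum>i<k. f (x i) * of_real (g (x (Suc i)) - g (x i)))"
  have 1: "norm (S - I) < e" unfolding S_def by (rule d1(2)) (use x in auto)
  have inab: "x i \<in> {a..b}" if "i \<le> k" for i
    using chain_mono[of k x 0 i] chain_mono[of k x i k] x that by auto
  have "norm S \<le> (\<Sum>i<k. norm (f (x i) * of_real (g (x (Suc i)) - g (x i))))"
    unfolding S_def by (rule norm_sum)
  also have "\<dots> \<le> (\<Sum>i<k. \<bar>g (x (Suc i)) - g (x i)\<bar>)"
  proof (rule sum_mono)
    fix i assume "i \<in> {..<k}"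
    then have "norm (f (x i)) \<le> 1" using f1 inab by auto
    have "norm (f (x i) * of_real (g (x (Suc i)) - g (x i))) = norm (f (x i)) * \<bar>g (x (Suc i)) - g (x i)\<bar>"
      by (metis norm_mult norm_of_real)
    also have "\<dots> \<le> \<bar>g (x (Suc i)) - g (x i)\<bar>"
      using \<open>norm (f (x i)) \<le> 1\<close> by (metis abs_ge_zero mult_left_le_one_le norm_ge_zero)
    finally show "norm (f (x i) * of_real (g (x (Suc i)) - g (x i))) \<le> \<bar>g (x (Suc i)) - g (x i)\<bar>" .
  qed
  also have "\<dots> \<le> B" by (rule var) (use x inab in auto)
  finally have "norm S \<le> B" .
  have "I = S - (S - I)" by simp
  then have "norm I \<le> norm S + norm (S - I)" by (metis norm_triangle_ineq4)
  then show "norm I \<le> B + e" using 1 \<open>norm S \<le> B\<close> by linarith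
qed

lemma int_piece_bound:
  fixes f f' :: "real \<Rightarrow> complex" and h :: "real \<Rightarrow> real"
  assumes cd: "c \<le> d" and p: "c \<le> p" "p \<le> d"
    and der: "\<And>y. y \<in> {c..d} \<Longrightarrow> (f has_vector_derivative f' y) (at y)"
    and cf': "continuous_on {c..d} f'" and ch: "continuous_on {c..d} h"
    and M: "\<And>y. y \<in> {c..d} \<Longrightarrow> norm (f' y) \<le> M"
    and eta: "\<And>y. y \<in> {c..d} \<Longrightarrow> \<bar>h y - h p\<bar> \<le> \<eta>"
  shows "norm (integral {c..d} (\<lambda>y. f' y * of_real (h y)) - (f d - f c) * of_real (h p)) \<le> M * \<eta> * (d - c)"
proof -
  have ftc: "(f' has_integral (f d - f c)) {c..d}"
    using fundamental_theorem_of_calculus[OF cd] der has_vector_derivative_at_within by blast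
  have i1: "((\<lambda>y. f' y * of_real (h p)) has_integral (f d - f c) * of_real (h p)) {c..d}"
    using has_integral_mult_left[OF ftc] .
  have "(\<lambda>y. f' y * of_real (h y)) integrable_on {c..d}"
    by (intro integrable_continuous_interval continuous_intros cf' ch)
  then have i2: "((\<lambda>y. f' y * of_real (h y)) has_integral integral {c..d} (\<lambda>y. f' y * of_real (h y))) {c..d}"
    by (rule integrable_integral)
  note i3 = has_integral_diff[OF i2 i1]
  have Mpos: "M \<ge> 0" using M[of c] cd by (smt (verit) atLeastAtMost_iff norm_ge_zero)
  have epos: "\<eta> \<ge> 0" using eta[of p] p by auto
  have bnd: "norm (f' y * of_real (h y) - f' y * of_real (h p)) \<le> M * \<eta>" if y: "y \<in> {c..d}" for y
  proof -
    have "norm (f' y * of_real (h y) - f' y * of_real (h p)) = norm (f' y) * \<bar>h y - h p\<bar>"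
      by (metis norm_mult norm_of_real of_real_diff right_diff_distrib)
    also have "\<dots> \<le> M * \<eta>" using M[of y] eta[of y] y Mpos epos by (intro mult_mono) auto
    finally show ?thesis .
  qed
  have "0 \<le> M * \<eta>" using Mpos epos by simp
  from has_integral_bound_real[OF this _ i3, of "{}"] bnd cd show ?thesis by simp
qed

lemma integral_partition_sum:
  fixes F :: "real \<Rightarrow> complex"
  assumes inc: "\<forall>i<k. x i < x (Suc i)" and F: "F integrable_on {x 0..x k}"
  shows "integral {x 0..x k} F = (\<Sum>i<k. integral {x i..x (Suc i)} F)"
proof -
  have "j \<le> k \<Longrightarrow> integral {x 0..x j} F = (\<Sum>i<j. integral {x i..x (Suc i)} F)" for j
  proof (induction j)
    case 0 then show ?case by simp
  next
    case (Suc j)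
    have a: "x 0 \<le> x j" "x j \<le> x (Suc j)" "x (Suc j) \<le> x k"
      using chain_mono[OF inc, of 0 j] chain_mono[OF inc, of j "Suc j"] chain_mono[OF inc, of "Suc j" k] Suc.prems by auto
    have Fi: "F integrable_on {x 0..x (Suc j)}"
      by (rule integrable_subinterval_real[OF F]) (use a in auto)
    then have "integral {x 0..x (Suc j)} F = integral {x 0..x j} F + integral {x j..x (Suc j)} F"
      using Henstock_Kurzweil_Integration.integral_combine[OF a(1,2) Fi] by simp
    then show ?case using Suc by simp
  qed
  then show ?thesis by simp
qed


lemma RS_IBP:
  fixes f f' :: "real \<Rightarrow> complex" and h :: "real \<Rightarrow> real"
  assumes ab: "a < b"
    and der: "\<And>y. y \<in> {a..b} \<Longrightarrow> (f has_vector_derivative f' y) (at y)"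
    and cf': "continuous_on {a..b} f'" and ch: "continuous_on {a..b} h"
  shows "has_RS_integral f h a b (f b * of_real (h b) - f a * of_real (h a) - integral {a..b} (\<lambda>y. f' y * of_real (h y)))"
  unfolding has_RS_integral_def
proof (intro allI impI)
  fix e :: real assume e: "e > 0"
  define F where "F y = f' y * of_real (h y)" for y
  obtain M0 where M0: "\<And>y. y \<in> {a..b} \<Longrightarrow> norm (f' y) \<le> M0"
    using compact_imp_bounded[OF compact_continuous_image[OF cf' compact_Icc]]
    unfolding bounded_iff by blast
  define M where "M = max M0 1"
  have M: "\<And>y. y \<in> {a..b} \<Longrightarrow> norm (f' y) \<le> M" and Mpos: "M > 0"
    using M0 by (auto simp: M_def intro: le_max_iff_disj[THEN iffD2])
  define \<eta> where "\<eta> = e / (2 * M * (b - a))"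
  have eta: "\<eta> > 0" using e Mpos ab by (simp add: \<eta>_def)
  obtain d where d: "d > 0" and dh: "\<And>x x'. x \<in> {a..b} \<Longrightarrow> x' \<in> {a..b} \<Longrightarrow> dist x' x < d \<Longrightarrow> dist (h x') (h x) < \<eta>"
    using compact_uniformly_continuous[OF ch compact_Icc] eta unfolding uniformly_continuous_on_def by metis
  show "\<exists>\<delta>>0. \<forall>k x \<xi>. x 0 = a \<and> x k = b \<and> (\<forall>i<k. x i < x (Suc i) \<and> x (Suc i) - x i < \<delta> \<and> x i \<le> \<xi> i \<and> \<xi> i \<le> x (Suc i)) \<longrightarrow>
      norm ((\<Sum>i<k. f (\<xi> i) * of_real (h (x (Suc i)) - h (x i))) - (f b * of_real (h b) - f a * of_real (h a) - integral {a..b} (\<lambda>y. f' y * of_real (h y)))) < e"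
  proof (intro exI[of _ d] conjI allI impI)
    show "d > 0" by (rule d)
    fix k x \<xi> assume H: "x 0 = a \<and> x k = b \<and> (\<forall>i<k. x i < x (Suc i) \<and> x (Suc i) - x i < d \<and> x i \<le> \<xi> i \<and> \<xi> i \<le> x (Suc i))"
    have x0: "x 0 = a" and xk: "x k = b" using H by auto
    have inc: "\<forall>i<k. x i < x (Suc i)" using H by auto
    have inab: "x i \<in> {a..b}" if "i \<le> k" for i
      using chain_mono[OF inc, of 0 i] chain_mono[OF inc, of i k] x0 xk that by auto
    have Fint: "F integrable_on {a..b}"
      unfolding F_def by (intro integrable_continuous_interval continuous_intros cf' ch)
    have split: "integral {a..b} F = (\<Sum>i<k. integral {x i..x (Suc i)} F)"
      using integral_partition_sum[OF inc] Fint x0 xk by simp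
    have tele: "f b * of_real (h b) - f a * of_real (h a) = (\<Sum>i<k. f (x (Suc i)) * of_real (h (x (Suc i))) - f (x i) * of_real (h (x i)))"
      using sum_lessThan_telescope[of "\<lambda>i. f (x i) * of_real (h (x i))" k] x0 xk by simp
    define E where "E i = f (\<xi> i) * of_real (h (x (Suc i)) - h (x i)) - (f (x (Suc i)) * of_real (h (x (Suc i))) - f (x i) * of_real (h (x i))) + integral {x i..x (Suc i)} F" for i
    have eq: "(\<Sum>i<k. f (\<xi> i) * of_real (h (x (Suc i)) - h (x i))) - (f b * of_real (h b) - f a * of_real (h a) - integral {a..b} (\<lambda>y. f' y * of_real (h y))) = (\<Sum>i<k. E i)"
    proof -
      have "(\<Sum>i<k. E i) = (\<Sum>i<k. f (\<xi> i) * of_real (h (x (Suc i)) - h (x i))) - (\<Sum>i<k. f (x (Suc i)) * of_real (h (x (Suc i))) - f (x i) * of_real (h (x i))) + (\<Sum>i<k. integral {x i..x (Suc i)} F)"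
        unfolding E_def sum.distrib sum_subtractf by simp
      then show ?thesis unfolding tele[symmetric] split[symmetric] F_def by simp
    qed
    have Eb: "norm (E i) \<le> M * \<eta> * (x (Suc i) - x i)" if i: "i < k" for i
    proof -
      have xi: "x i \<le> \<xi> i" "\<xi> i \<le> x (Suc i)" "x (Suc i) - x i < d" using H i by auto
      have sub: "{x i..x (Suc i)} \<subseteq> {a..b}" using inab[of i] inab[of "Suc i"] i by auto
      have Fi: "F integrable_on {x i..x (Suc i)}" by (rule integrable_subinterval_real[OF Fint sub])
      have comb: "integral {x i..x (Suc i)} F = integral {x i..\<xi> i} F + integral {\<xi> i..x (Suc i)} F"
        using Henstock_Kurzweil_Integration.integral_combine[OF xi(1,2) Fi] by simp
      have Ed: "E i = (integral {x i..\<xi> i} F - (f (\<xi> i) - f (x i)) * of_real (h (x i)))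
                    + (integral {\<xi> i..x (Suc i)} F - (f (x (Suc i)) - f (\<xi> i)) * of_real (h (x (Suc i))))"
        unfolding E_def comb by (simp add: algebra_simps)
      have b1: "norm (integral {x i..\<xi> i} F - (f (\<xi> i) - f (x i)) * of_real (h (x i))) \<le> M * \<eta> * (\<xi> i - x i)"
        unfolding F_def
      proof (rule int_piece_bound)
        show "x i \<le> \<xi> i" "x i \<le> x i" "x i \<le> \<xi> i" using xi by auto
        fix y assume y: "y \<in> {x i..\<xi> i}"
        then have ya: "y \<in> {a..b}" using sub xi by auto
        show "(f has_vector_derivative f' y) (at y)" using der ya by auto
        show "norm (f' y) \<le> M" using M ya by auto
        have "dist y (x i) < d" using y xi by (auto simp: dist_real_def)
        then have "dist (h y) (h (x i)) < \<eta>" using dh[of "x i" y] ya inab[of i] i by auto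
        then show "\<bar>h y - h (x i)\<bar> \<le> \<eta>" by (simp add: dist_real_def)
      next
        show "continuous_on {x i..\<xi> i} f'" "continuous_on {x i..\<xi> i} h"
          using sub xi by (auto intro: continuous_on_subset[OF cf'] continuous_on_subset[OF ch])
      qed
      have b2: "norm (integral {\<xi> i..x (Suc i)} F - (f (x (Suc i)) - f (\<xi> i)) * of_real (h (x (Suc i)))) \<le> M * \<eta> * (x (Suc i) - \<xi> i)"
        unfolding F_def
      proof (rule int_piece_bound)
        show "\<xi> i \<le> x (Suc i)" "\<xi> i \<le> x (Suc i)" "x (Suc i) \<le> x (Suc i)" using xi by auto
        fix y assume y: "y \<in> {\<xi> i..x (Suc i)}"
        then have ya: "y \<in> {a..b}" using sub xi by auto
        show "(f has_vector_derivative f' y) (at y)" using der ya by auto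
        show "norm (f' y) \<le> M" using M ya by auto
        have "dist y (x (Suc i)) < d" using y xi by (auto simp: dist_real_def)
        then have "dist (h y) (h (x (Suc i))) < \<eta>" using dh[of "x (Suc i)" y] ya inab[of "Suc i"] i by auto
        then show "\<bar>h y - h (x (Suc i))\<bar> \<le> \<eta>" by (simp add: dist_real_def)
      next
        show "continuous_on {\<xi> i..x (Suc i)} f'" "continuous_on {\<xi> i..x (Suc i)} h"
          using sub xi by (auto intro: continuous_on_subset[OF cf'] continuous_on_subset[OF ch])
      qed
      have "norm (E i) \<le> M * \<eta> * (\<xi> i - x i) + M * \<eta> * (x (Suc i) - \<xi> i)"
        unfolding Ed using b1 b2 norm_triangle_le by (smt (verit, best) norm_triangle_ineq)
      then show ?thesis by (simp add: algebra_simps)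
    qed
    have "norm (\<Sum>i<k. E i) \<le> (\<Sum>i<k. M * \<eta> * (x (Suc i) - x i))"
      by (rule order_trans[OF norm_sum sum_mono]) (use Eb in auto)
    also have "\<dots> = M * \<eta> * (b - a)"
      using sum_lessThan_telescope[of x k] x0 xk by (simp add: sum_distrib_left[symmetric])
    also have "\<dots> = e / 2" using Mpos ab by (simp add: \<eta>_def field_simps)
    also have "\<dots> < e" using e by simp
    finally show "norm ((\<Sum>i<k. f (\<xi> i) * of_real (h (x (Suc i)) - h (x i))) - (f b * of_real (h b) - f a * of_real (h a) - integral {a..b} (\<lambda>y. f' y * of_real (h y)))) < e"
      unfolding eq .
  qed
qed


lemma set_integrable_dominated:
  fixes h :: "real \<Rightarrow> 'b::{banach, second_countable_topology}" and g :: "real \<Rightarrow> real"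
  assumes S: "S \<in> sets borel" and ch: "continuous_on S h" and ig: "set_integrable lborel S g"
    and b: "\<And>x. x \<in> S \<Longrightarrow> norm (h x) \<le> norm (g x)"
  shows "set_integrable lborel S h"
proof (rule set_integrable_bound[OF ig])
  show "set_borel_measurable lborel S h"
    unfolding set_borel_measurable_def using borel_measurable_continuous_on_indicator[OF S ch] by simp
  show "AE x in lborel. x \<in> S \<longrightarrow> norm (h x) \<le> norm (g x)" using b by auto
qed

lemma set_integrable_cont_Icc:
  fixes h :: "real \<Rightarrow> 'b::{banach, second_countable_topology}"
  assumes "continuous_on {a..b} h"
  shows "set_integrable lborel {a..b} h"
  unfolding set_integrable_def by (rule borel_integrable_compact[OF compact_Icc assms])

lemma set_integral_norm_le:
  fixes f :: "real \<Rightarrow> 'b::{banach, second_countable_topology}"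
  assumes "set_integrable lborel S f"
  shows "norm (LINT x:S|lborel. f x) \<le> (LINT x:S|lborel. norm (f x))"
proof -
  have "norm (LINT x:S|lborel. f x) \<le> (LINT x|lborel. norm (indicator S x *\<^sub>R f x))"
    unfolding set_lebesgue_integral_def by (rule integral_norm_bound)
  also have "\<dots> = (LINT x:S|lborel. norm (f x))"
    unfolding set_lebesgue_integral_def by (intro Bochner_Integration.integral_cong) (auto split: split_indicator)
  finally show ?thesis .
qed

lemma HK_tendsto_LINT:
  fixes f :: "real \<Rightarrow> 'b::euclidean_space"
  assumes "set_integrable lborel {a..} f"
  shows "((\<lambda>b. integral {a..b} f) \<longlongrightarrow> (LINT x:{a..}|lborel. f x)) at_top"
proof -
  have "((\<lambda>b. LINT x:{a..b}|lborel. f x) \<longlongrightarrow> (LINT x:{a..}|lborel. f x)) at_top"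
    by (rule tendsto_set_lebesgue_integral_at_top[OF _ assms]) auto
  moreover have "(LINT x:{a..b}|lborel. f x) = integral {a..b} f" for b
    by (rule set_borel_integral_eq_integral(2)) (rule set_integrable_subset[OF assms], auto)
  ultimately show ?thesis by simp
qed

lemma improper_FTC:
  fixes f F :: "real \<Rightarrow> 'b::euclidean_space"
  assumes int: "set_integrable lborel {a..} f"
    and der: "\<And>x. x \<ge> a \<Longrightarrow> (F has_vector_derivative f x) (at x)"
    and lim: "(F \<longlongrightarrow> B) at_top"
  shows "(LINT x:{a..}|lborel. f x) = B - F a"
proof (rule tendsto_unique[OF _ HK_tendsto_LINT[OF int]])
  show "(at_top::real filter) \<noteq> bot" by simp
  have "\<forall>\<^sub>F b in at_top. F b - F a = integral {a..b} f"
    using eventually_ge_at_top[of a]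
  proof eventually_elim
    case (elim b)
    have "(f has_integral (F b - F a)) {a..b}"
      by (rule fundamental_theorem_of_calculus[OF elim]) (auto intro: has_vector_derivative_at_within der)
    then show ?case by (simp add: integral_unique)
  qed
  moreover have "((\<lambda>b. F b - F a) \<longlongrightarrow> B - F a) at_top" by (intro tendsto_intros lim)
  ultimately show "((\<lambda>b. integral {a..b} f) \<longlongrightarrow> B - F a) at_top"
    by (rule Lim_transform_eventually[rotated])
qed

lemma RS0inf:
  fixes f f' :: "real \<Rightarrow> complex" and h :: "real \<Rightarrow> real"
  assumes der: "\<And>y. (f has_vector_derivative f' y) (at y)"
    and cf': "continuous_on UNIV f'" and ch: "continuous_on {0..} h"
    and beta: "((\<lambda>b. f b * of_real (h b)) \<longlongrightarrow> \<beta>) at_top"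
    and J: "((\<lambda>b. integral {0..b} (\<lambda>y. f' y * of_real (h y))) \<longlongrightarrow> J) at_top"
  shows "RS_integral_0_inf f h = \<beta> - f 0 * of_real (h 0) - J"
  unfolding RS_integral_0_inf_def
proof (rule tendsto_Lim)
  show "\<not> trivial_limit (at_top :: real filter)" by simp
  have "\<forall>\<^sub>F b in at_top. f b * of_real (h b) - f 0 * of_real (h 0) - integral {0..b} (\<lambda>y. f' y * of_real (h y)) = RS_integral f h 0 b"
    using eventually_gt_at_top[of 0]
  proof eventually_elim
    case (elim b)
    show ?case
      by (rule RS_integral_eqI[OF elim, symmetric], rule RS_IBP[OF elim der])
         (auto intro: continuous_on_subset[OF cf'] continuous_on_subset[OF ch])
  qed
  moreover have "((\<lambda>b. f b * of_real (h b) - f 0 * of_real (h 0) - integral {0..b} (\<lambda>y. f' y * of_real (h y))) \<longlongrightarrow> \<beta> - f 0 * of_real (h 0) - J) at_top"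
    by (intro tendsto_intros beta J)
  ultimately show "((\<lambda>b. RS_integral f h 0 b) \<longlongrightarrow> \<beta> - f 0 * of_real (h 0) - J) at_top"
    by (rule Lim_transform_eventually[rotated])
qed

lemma cis_vderiv: "((\<lambda>x. cis (t * x)) has_vector_derivative (\<i> * of_real t) * cis (t * x)) (at x)"
proof -
  have "((\<lambda>z. exp (\<i> * of_real t * z)) has_field_derivative exp (\<i> * of_real t * of_real x) * (\<i> * of_real t)) (at (of_real x))"
    by (auto intro!: derivative_eq_intros)
  from has_vector_derivative_real_field[OF this] show ?thesis
    by (simp add: cis_conv_exp mult_ac)
qed


lemma set_integrable_Ioi_Ici:
  fixes f :: "real \<Rightarrow> 'b::{banach, second_countable_topology}"
  assumes "set_integrable lborel {a<..} f"
  shows "set_integrable lborel {a..} f"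
proof -
  have "set_integrable lborel {a..a} f" by (rule set_integrable_cont_Icc) simp
  then have "set_integrable lborel ({a..a} \<union> {a<..}) f" by (rule set_integrable_Un[OF _ assms]) auto
  moreover have "{a..a} \<union> {a<..} = {a..}" by auto
  ultimately show ?thesis by simp
qed

lemma exp_int: fixes \<epsilon> :: real assumes e: "\<epsilon> > 0" shows "set_integrable lborel {0..} (\<lambda>t. exp (-(\<epsilon> * t)))"
  using set_integrable_Ioi_Ici[OF integrable_I0i_exp_mscale[OF e]] by (simp add: mult.commute)

lemma texp_bound: fixes \<epsilon> t :: real assumes e: "\<epsilon> > 0" and t: "t \<ge> 0"
  shows "t * exp (-(\<epsilon> * t)) \<le> (2 / \<epsilon>) * exp (-((\<epsilon> / 2) * t))"
proof -
  have "\<epsilon> * t / 2 \<le> exp (\<epsilon> * t / 2)" using exp_ge_add_one_self[of "\<epsilon> * t / 2"] by linarith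
  then have "\<epsilon> * t / 2 * exp (-(\<epsilon> * t)) \<le> exp (\<epsilon> * t / 2) * exp (-(\<epsilon> * t))"
    by (rule mult_right_mono) simp
  also have "\<dots> = exp (-((\<epsilon> / 2) * t))" by (simp add: exp_add[symmetric])
  finally show ?thesis using e by (simp add: field_simps)
qed

lemma texp_int: fixes \<epsilon> :: real assumes e: "\<epsilon> > 0" shows "set_integrable lborel {0..} (\<lambda>t. t * exp (-(\<epsilon> * t)))"
proof (rule set_integrable_dominated)
  show "set_integrable lborel {0..} (\<lambda>t. (2 / \<epsilon>) * exp (-((\<epsilon> / 2) * t)))"
    using exp_int[of "\<epsilon> / 2"] e by (intro set_integrable_mult_right) auto
  show "norm (t * exp (-(\<epsilon> * t))) \<le> norm ((2 / \<epsilon>) * exp (-((\<epsilon> / 2) * t)))" if "t \<in> {0..}" for t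
    using texp_bound[OF e, of t] that e by simp
qed (auto intro!: continuous_intros)

lemma exp_tend: fixes c :: real assumes c: "c > 0" shows "((\<lambda>b. exp (-(c * b))) \<longlongrightarrow> 0) at_top"
proof -
  have "filterlim (\<lambda>b. c * b) at_top at_top"
    by (intro filterlim_tendsto_pos_mult_at_top[where c=c] tendsto_const filterlim_ident c)
  then have "filterlim (\<lambda>b. -(c * b)) at_bot at_top"
    by (simp add: filterlim_uminus_at_bot)
  from filterlim_compose[OF exp_at_bot this] show ?thesis by simp
qed

lemma texp_tend: fixes c :: real assumes c: "c > 0" shows "((\<lambda>b. b * exp (-(c * b))) \<longlongrightarrow> 0) at_top"
proof -
  have "filterlim (\<lambda>b. c * b) at_top at_top"
    by (intro filterlim_tendsto_pos_mult_at_top[where c=c] tendsto_const filterlim_ident c)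
  from filterlim_compose[OF tendsto_power_div_exp_0[of 1] this]
  have "((\<lambda>b. (c * b) / exp (c * b)) \<longlongrightarrow> 0) at_top" by simp
  then have "((\<lambda>b. (1 / c) * ((c * b) / exp (c * b))) \<longlongrightarrow> (1/c) * 0) at_top" by (intro tendsto_intros)
  moreover have "(1 / c) * ((c * b) / exp (c * b)) = b * exp (-(c * b))" for b
    using c by (simp add: exp_minus field_simps)
  ultimately show ?thesis by simp
qed

lemma exp_val: fixes \<epsilon> :: real assumes e: "\<epsilon> > 0" shows "(LINT t:{0..}|lborel. \<epsilon> * exp (-(\<epsilon> * t))) = 1"
proof -
  have "(LINT t:{0..}|lborel. \<epsilon> * exp (-(\<epsilon> * t))) = 0 - (- exp (-(\<epsilon> * 0)))"
  proof (rule improper_FTC[where F="\<lambda>t. - exp (-(\<epsilon> * t))"])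
    show "set_integrable lborel {0..} (\<lambda>t. \<epsilon> * exp (-(\<epsilon> * t)))"
      using exp_int[OF e] by (rule set_integrable_mult_right)
    show "((\<lambda>t. - exp (-(\<epsilon> * t))) has_vector_derivative \<epsilon> * exp (-(\<epsilon> * x))) (at x)" for x
      by (auto intro!: derivative_eq_intros simp: has_real_derivative_iff_has_vector_derivative[symmetric])
    show "((\<lambda>t. - exp (-(\<epsilon> * t))) \<longlongrightarrow> 0) at_top"
      using tendsto_minus[OF exp_tend[OF e]] by simp
  qed
  then show ?thesis by simp
qed

lemma inner_val:
  fixes \<epsilon> x :: real
  assumes e: "\<epsilon> > 0"
  shows "(LINT t:{0..}|lborel. of_real (t * exp (-(\<epsilon> * t))) * cis (t * x)) = 1 / (of_real \<epsilon> - \<i> * of_real x)^2"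
proof -
  define a where "a = of_real \<epsilon> - \<i> * of_real x"
  have a0: "a \<noteq> 0" using e by (auto simp: a_def complex_eq_iff)
  have ex: "exp (-(a * of_real t)) = of_real (exp (-(\<epsilon> * t))) * cis (t * x)" for t
  proof -
    have eq: "-(a * of_real t) = of_real (-(\<epsilon> * t)) + \<i> * of_real (t * x)" by (simp add: a_def algebra_simps)
    have "exp (-(a * of_real t)) = exp (of_real (-(\<epsilon> * t))) * exp (\<i> * of_real (t * x))"
      unfolding eq by (rule exp_add)
    also have "\<dots> = of_real (exp (-(\<epsilon> * t))) * cis (t * x)"
      by (simp only: exp_of_real cis_conv_exp)
    finally show ?thesis .
  qed
  define F where "F z = -(z / a + 1 / a^2) * exp (-(a * z))" for z
  have "(LINT t:{0..}|lborel. of_real (t * exp (-(\<epsilon> * t))) * cis (t * x)) = 0 - F (of_real 0)"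
  proof (rule improper_FTC[where F="\<lambda>t. F (of_real t)"])
    show "set_integrable lborel {0..} (\<lambda>t. of_real (t * exp (-(\<epsilon> * t))) * cis (t * x))"
      by (rule set_integrable_dominated[OF _ _ texp_int[OF e]]) (auto intro!: continuous_intros simp: norm_mult)
    show "((\<lambda>t. F (of_real t)) has_vector_derivative of_real (t * exp (-(\<epsilon> * t))) * cis (t * x)) (at t)" for t
    proof -
      define z0 where "z0 = (of_real t :: complex)"
      have d1: "((\<lambda>z. -(z * (1/a) + (1/a)^2)) has_field_derivative -(1/a)) (at z0)"
        using a0 by (auto intro!: derivative_eq_intros)
      have d2: "((\<lambda>z. exp (-(a * z))) has_field_derivative exp (-(a * z0)) * (-a)) (at z0)"
        by (auto intro!: derivative_eq_intros)
      have "(F has_field_derivative (-(1/a)) * exp (-(a * z0)) + exp (-(a * z0)) * (-a) * (-(z0 * (1/a) + (1/a)^2))) (at z0)"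
      proof -
        have eqF: "F = (\<lambda>z. -(z * (1/a) + (1/a)^2) * exp (-(a * z)))"
          by (rule ext) (simp only: F_def times_divide_eq_right mult_1_right power_one_over)
        show ?thesis unfolding eqF by (rule DERIV_mult[OF d1 d2])
      qed
      from this[unfolded z0_def] have "(F has_field_derivative of_real t * exp (-(a * of_real t))) (at (of_real t))"
        by (rule DERIV_cong) (use a0 in \<open>simp add: field_simps power2_eq_square\<close>)
      from has_vector_derivative_real_field[OF this] show ?thesis by (simp add: ex mult.assoc)
    qed
    show "((\<lambda>t. F (of_real t)) \<longlongrightarrow> 0) at_top"
    proof (rule Lim_null_comparison)
      show "\<forall>\<^sub>F b in at_top. norm (F (of_real b)) \<le> (1 / norm a) * (b * exp (-(\<epsilon> * b))) + (1 / norm a ^ 2) * exp (-(\<epsilon> * b))"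
        using eventually_ge_at_top[of 0]
      proof eventually_elim
        case (elim b)
        have nexp: "norm (exp (-(a * of_real b))) = exp (-(\<epsilon> * b))" by (simp add: a_def)
        have "norm (F (of_real b)) = norm (of_real b / a + 1 / a^2) * exp (-(\<epsilon> * b))"
          unfolding F_def by (simp only: norm_mult norm_minus_cancel nexp)
        also have "\<dots> \<le> (norm (of_real b / a) + norm (1 / a^2)) * exp (-(\<epsilon> * b))"
          by (intro mult_right_mono norm_triangle_ineq) simp
        also have "\<dots> = (1 / norm a) * (b * exp (-(\<epsilon> * b))) + (1 / norm a ^ 2) * exp (-(\<epsilon> * b))"
          using elim by (simp add: norm_divide norm_power field_simps)
        finally show ?case .
      qed
      have "((\<lambda>b. (1 / norm a) * (b * exp (-(\<epsilon> * b))) + (1 / norm a ^ 2) * exp (-(\<epsilon> * b))) \<longlongrightarrow> (1 / norm a) * 0 + (1 / norm a ^ 2) * 0) at_top"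
        by (intro tendsto_intros texp_tend exp_tend e)
      then show "((\<lambda>b. (1 / norm a) * (b * exp (-(\<epsilon> * b))) + (1 / norm a ^ 2) * exp (-(\<epsilon> * b))) \<longlongrightarrow> 0) at_top" by simp
    qed
  qed
  then show ?thesis by (simp add: F_def a_def)
qed


lemma kern_nz: fixes \<epsilon> y :: real assumes "\<epsilon> > 0" shows "of_real \<epsilon> - \<i> * of_real y \<noteq> 0"
  using assms by (auto simp: complex_eq_iff)

lemma kern_norm: fixes \<epsilon> x :: real assumes e: "\<epsilon> > 0"
  shows "norm (of_real \<epsilon> / (of_real \<epsilon> - \<i> * of_real x)^2) = \<epsilon> / (\<epsilon>^2 + x^2)"
proof -
  have "(norm (of_real \<epsilon> - \<i> * of_real x))^2 = \<epsilon>^2 + x^2" by (simp add: cmod_power2)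
  then show ?thesis using e by (simp add: norm_divide norm_power)
qed

lemma kern_le: fixes \<epsilon> x :: real assumes e: "\<epsilon> > 0"
  shows "\<epsilon> / (\<epsilon>^2 + x^2) \<le> 1 / \<epsilon>" and "x \<noteq> 0 \<Longrightarrow> \<epsilon> / (\<epsilon>^2 + x^2) \<le> \<epsilon> / x^2"
proof -
  have p: "\<epsilon>^2 + x^2 > 0" using e by (simp add: add_pos_nonneg)
  show "\<epsilon> / (\<epsilon>^2 + x^2) \<le> 1 / \<epsilon>" using e p by (simp add: field_simps power2_eq_square)
  assume "x \<noteq> 0"
  then have "x^2 > 0" by simp
  then show "\<epsilon> / (\<epsilon>^2 + x^2) \<le> \<epsilon> / x^2" using e p by (intro divide_left_mono) auto
qed

lemma kern_int: fixes \<epsilon> \<delta> :: real assumes e: "\<epsilon> > 0" and d: "\<delta> \<ge> 0"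
  shows "integral {0..\<delta>} (\<lambda>x. of_real \<epsilon> / (of_real \<epsilon> - \<i> * of_real x)^2) = \<i> - \<i> * of_real \<epsilon> / (of_real \<epsilon> - \<i> * of_real \<delta>)"
proof -
  define K where "K z = - \<i> * of_real \<epsilon> * inverse (of_real \<epsilon> - \<i> * z)" for z
  have der: "((\<lambda>y. K (of_real y)) has_vector_derivative of_real \<epsilon> / (of_real \<epsilon> - \<i> * of_real y)^2) (at y)" for y
  proof -
    have nz: "of_real \<epsilon> - \<i> * of_real y \<noteq> 0" by (rule kern_nz[OF e])
    have "(K has_field_derivative - \<i> * of_real \<epsilon> * (- (inverse (of_real \<epsilon> - \<i> * of_real y) * (0 - \<i> * 1) * inverse (of_real \<epsilon> - \<i> * of_real y)))) (at (of_real y))"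
      unfolding K_def[abs_def] using nz by (intro derivative_eq_intros) auto
    then have "(K has_field_derivative of_real \<epsilon> / (of_real \<epsilon> - \<i> * of_real y)^2) (at (of_real y))"
      by (rule DERIV_cong) (use nz in \<open>simp add: field_simps power2_eq_square\<close>)
    from has_vector_derivative_real_field[OF this] show ?thesis .
  qed
  have "((\<lambda>x. of_real \<epsilon> / (of_real \<epsilon> - \<i> * of_real x)^2) has_integral (K (of_real \<delta>) - K (of_real 0))) {0..\<delta>}"
    by (rule fundamental_theorem_of_calculus[OF d]) (auto intro: has_vector_derivative_at_within der)
  then have "integral {0..\<delta>} (\<lambda>x. of_real \<epsilon> / (of_real \<epsilon> - \<i> * of_real x)^2) = K (of_real \<delta>) - K (of_real 0)"
    by (rule integral_unique)
  also have "\<dots> = \<i> - \<i> * of_real \<epsilon> / (of_real \<epsilon> - \<i> * of_real \<delta>)"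
    using e by (simp add: K_def divide_inverse)
  finally show ?thesis .
qed

lemma arctan_int: fixes \<epsilon> \<delta> :: real assumes e: "\<epsilon> > 0" and d: "\<delta> \<ge> 0"
  shows "integral {0..\<delta>} (\<lambda>x. \<epsilon> / (\<epsilon>^2 + x^2)) = arctan (\<delta> / \<epsilon>)"
proof -
  have der: "((\<lambda>x. arctan (x / \<epsilon>)) has_vector_derivative \<epsilon> / (\<epsilon>^2 + x^2)) (at x)" for x
  proof -
    have "((\<lambda>x. arctan (x / \<epsilon>)) has_real_derivative inverse (1 + (x / \<epsilon>)^2) * (1 / \<epsilon>)) (at x)"
      using e by (auto intro!: derivative_eq_intros)
    moreover have "inverse (1 + (x / \<epsilon>)^2) * (1 / \<epsilon>) = \<epsilon> / (\<epsilon>^2 + x^2)"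
      using e by (simp add: field_simps power2_eq_square)
    ultimately show ?thesis by (simp add: has_real_derivative_iff_has_vector_derivative)
  qed
  have "((\<lambda>x. \<epsilon> / (\<epsilon>^2 + x^2)) has_integral (arctan (\<delta> / \<epsilon>) - arctan (0 / \<epsilon>))) {0..\<delta>}"
    by (rule fundamental_theorem_of_calculus[OF d]) (auto intro: has_vector_derivative_at_within der)
  then show ?thesis by (simp add: integral_unique)
qed


lemma set_integrable_norm':
  fixes f :: "real \<Rightarrow> 'b::{banach, second_countable_topology}"
  assumes "set_integrable M A f" shows "set_integrable M A (\<lambda>x. norm (f x))"
proof -
  have "integrable M (\<lambda>x. norm (indicator A x *\<^sub>R f x))"
    using assms unfolding set_integrable_def by (rule integrable_norm)
  moreover have "norm (indicator A x *\<^sub>R f x) = indicator A x *\<^sub>R norm (f x)" for x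
    by (simp split: split_indicator)
  ultimately show ?thesis unfolding set_integrable_def by simp
qed

lemma set_integral_nonneg':
  fixes f :: "real \<Rightarrow> real"
  assumes "\<And>x. x \<in> A \<Longrightarrow> 0 \<le> f x" shows "0 \<le> (LINT x:A|M. f x)"
  unfolding set_lebesgue_integral_def
  by (rule Bochner_Integration.integral_nonneg) (use assms in \<open>auto split: split_indicator\<close>)

lemma xside:
  fixes gg :: "real \<Rightarrow> real" and \<epsilon> \<delta> \<eta> :: real
  assumes cg: "continuous_on {0..} gg" and ig: "set_integrable lborel {0..} gg"
    and e: "\<epsilon> > 0" and d: "\<delta> > 0" and hd: "\<And>x. x \<in> {0..\<delta>} \<Longrightarrow> \<bar>gg x - gg 0\<bar> \<le> \<eta>"
  shows "norm ((LINT x:{0..}|lborel. of_real (gg x) * (of_real \<epsilon> / (of_real \<epsilon> - \<i> * of_real x)^2)) - \<i> * of_real (gg 0))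
         \<le> \<eta> * 2 + \<bar>gg 0\<bar> * (\<epsilon> / \<delta>) + (LINT x:{0..}|lborel. \<bar>gg x\<bar>) * (\<epsilon> / \<delta>^2)"
proof -
  define k where "k x = of_real \<epsilon> / (of_real \<epsilon> - \<i> * of_real x)^2" for x :: real
  have kc: "continuous_on S k" for S unfolding k_def by (intro continuous_intros) (use e in \<open>auto simp: kern_nz[OF e]\<close>)
  have nk: "norm (k x) = \<epsilon> / (\<epsilon>^2 + x^2)" for x unfolding k_def by (rule kern_norm[OF e])
  have eta0: "\<eta> \<ge> 0" using hd[of 0] d by auto
  define F where "F x = of_real (gg x) * k x" for x
  have Fint: "set_integrable lborel {0..} F"
  proof (rule set_integrable_dominated[where g="\<lambda>x. (1/\<epsilon>) * gg x"])
    show "set_integrable lborel {0..} (\<lambda>x. (1/\<epsilon>) * gg x)" using ig by (rule set_integrable_mult_right)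
    show "continuous_on {0..} F" unfolding F_def by (intro continuous_intros cg kc)
    show "norm (F x) \<le> norm ((1/\<epsilon>) * gg x)" for x
    proof -
      have "norm (F x) = \<bar>gg x\<bar> * (\<epsilon> / (\<epsilon>^2 + x^2))" by (simp add: F_def norm_mult nk)
      also have "\<dots> \<le> \<bar>gg x\<bar> * (1 / \<epsilon>)" by (intro mult_left_mono kern_le(1)[OF e]) auto
      finally show ?thesis using e by (simp add: abs_mult)
    qed
  qed auto
  have FA: "set_integrable lborel {0..\<delta>} F" by (rule set_integrable_subset[OF Fint]) auto
  have FB: "set_integrable lborel {\<delta><..} F" by (rule set_integrable_subset[OF Fint]) (use d in auto)
  have un: "{0..} = {0..\<delta>} \<union> {\<delta><..}" using d by auto
  have split: "(LINT x:{0..}|lborel. F x) = (LINT x:{0..\<delta>}|lborel. F x) + (LINT x:{\<delta><..}|lborel. F x)"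
    by (subst un, rule set_integral_Un[OF _ FA FB]) auto
  have agA: "set_integrable lborel {0..\<delta>} (\<lambda>x. \<bar>gg x\<bar>)"
    using set_integrable_abs[OF ig] by (rule set_integrable_subset) auto
  have agB: "set_integrable lborel {\<delta><..} (\<lambda>x. \<bar>gg x\<bar>)"
    using set_integrable_abs[OF ig] by (rule set_integrable_subset) (use d in auto)
  have Ble: "(LINT x:{\<delta><..}|lborel. \<bar>gg x\<bar>) \<le> (LINT x:{0..}|lborel. \<bar>gg x\<bar>)"
  proof -
    have "(LINT x:{0..}|lborel. \<bar>gg x\<bar>) = (LINT x:{0..\<delta>}|lborel. \<bar>gg x\<bar>) + (LINT x:{\<delta><..}|lborel. \<bar>gg x\<bar>)"
      by (subst un, rule set_integral_Un[OF _ agA agB]) auto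
    moreover have "0 \<le> (LINT x:{0..\<delta>}|lborel. \<bar>gg x\<bar>)" by (rule set_integral_nonneg') auto
    ultimately show ?thesis by linarith
  qed
  have Bb: "norm (LINT x:{\<delta><..}|lborel. F x) \<le> (LINT x:{0..}|lborel. \<bar>gg x\<bar>) * (\<epsilon> / \<delta>^2)"
  proof -
    have "norm (LINT x:{\<delta><..}|lborel. F x) \<le> (LINT x:{\<delta><..}|lborel. norm (F x))" by (rule set_integral_norm_le[OF FB])
    also have "\<dots> \<le> (LINT x:{\<delta><..}|lborel. (\<epsilon> / \<delta>^2) * \<bar>gg x\<bar>)"
    proof (rule set_integral_mono)
      show "set_integrable lborel {\<delta><..} (\<lambda>x. norm (F x))" by (rule set_integrable_norm'[OF FB])
      show "set_integrable lborel {\<delta><..} (\<lambda>x. (\<epsilon> / \<delta>^2) * \<bar>gg x\<bar>)" using agB by (rule set_integrable_mult_right)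
      fix x assume x: "x \<in> {\<delta><..}"
      then have x0: "x \<noteq> 0" "x > 0" using d by auto
      have "norm (F x) = \<bar>gg x\<bar> * (\<epsilon> / (\<epsilon>^2 + x^2))" by (simp add: F_def norm_mult nk)
      also have "\<dots> \<le> \<bar>gg x\<bar> * (\<epsilon> / x^2)" by (intro mult_left_mono kern_le(2)[OF e x0(1)]) auto
      also have "\<dots> \<le> \<bar>gg x\<bar> * (\<epsilon> / \<delta>^2)"
      proof (intro mult_left_mono divide_left_mono)
        show "\<delta>^2 \<le> x^2" using x d by (intro power_mono) auto
      qed (use e d x0 in auto)
      finally show "norm (F x) \<le> (\<epsilon> / \<delta>^2) * \<bar>gg x\<bar>" by (simp add: mult.commute)
    qed
    also have "\<dots> = (\<epsilon> / \<delta>^2) * (LINT x:{\<delta><..}|lborel. \<bar>gg x\<bar>)" by simp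
    also have "\<dots> \<le> (\<epsilon> / \<delta>^2) * (LINT x:{0..}|lborel. \<bar>gg x\<bar>)"
      by (rule mult_left_mono[OF Ble]) (use e in simp)
    finally show ?thesis by (simp add: mult.commute)
  qed
  have kA: "set_integrable lborel {0..\<delta>} k" by (rule set_integrable_cont_Icc[OF kc])
  have kval: "(LINT x:{0..\<delta>}|lborel. k x) = \<i> - \<i> * of_real \<epsilon> / (of_real \<epsilon> - \<i> * of_real \<delta>)"
    using set_borel_integral_eq_integral(2)[OF kA] kern_int[OF e, of \<delta>] d unfolding k_def by simp
  have GA: "set_integrable lborel {0..\<delta>} (\<lambda>x. of_real (gg x - gg 0) * k x)"
    by (rule set_integrable_cont_Icc) (intro continuous_intros kc continuous_on_subset[OF cg], auto)
  have kA': "set_integrable lborel {0..\<delta>} (\<lambda>x. of_real (gg 0) * k x)" using kA by (rule set_integrable_mult_right)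
  have Aeq: "(LINT x:{0..\<delta>}|lborel. F x) = (LINT x:{0..\<delta>}|lborel. of_real (gg x - gg 0) * k x) + of_real (gg 0) * (LINT x:{0..\<delta>}|lborel. k x)"
  proof -
    have "(LINT x:{0..\<delta>}|lborel. F x) = (LINT x:{0..\<delta>}|lborel. of_real (gg x - gg 0) * k x + of_real (gg 0) * k x)"
      by (simp add: F_def algebra_simps)
    also have "\<dots> = (LINT x:{0..\<delta>}|lborel. of_real (gg x - gg 0) * k x) + (LINT x:{0..\<delta>}|lborel. of_real (gg 0) * k x)"
      by (rule set_integral_add(2)[OF GA kA'])
    finally show ?thesis by simp
  qed
  have A1b: "norm (LINT x:{0..\<delta>}|lborel. of_real (gg x - gg 0) * k x) \<le> \<eta> * 2"
  proof -
    have kr: "set_integrable lborel {0..\<delta>} (\<lambda>x. \<eta> * (\<epsilon> / (\<epsilon>^2 + x^2)))"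
      by (rule set_integrable_cont_Icc) (intro continuous_intros, use e in \<open>auto simp: add_pos_nonneg\<close>)
    have "norm (LINT x:{0..\<delta>}|lborel. of_real (gg x - gg 0) * k x) \<le> (LINT x:{0..\<delta>}|lborel. norm (of_real (gg x - gg 0) * k x))"
      by (rule set_integral_norm_le[OF GA])
    also have "\<dots> \<le> (LINT x:{0..\<delta>}|lborel. \<eta> * (\<epsilon> / (\<epsilon>^2 + x^2)))"
    proof (rule set_integral_mono[OF set_integrable_norm'[OF GA] kr])
      fix x assume x: "x \<in> {0..\<delta>}"
      have "norm (of_real (gg x - gg 0) * k x) = \<bar>gg x - gg 0\<bar> * (\<epsilon> / (\<epsilon>^2 + x^2))" by (simp only: norm_mult norm_of_real nk)
      also have "\<dots> \<le> \<eta> * (\<epsilon> / (\<epsilon>^2 + x^2))"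
        by (rule mult_right_mono[OF hd[OF x]]) (use e in \<open>simp add: add_pos_nonneg\<close>)
      finally show "norm (of_real (gg x - gg 0) * k x) \<le> \<eta> * (\<epsilon> / (\<epsilon>^2 + x^2))" .
    qed
    also have "\<dots> = \<eta> * integral {0..\<delta>} (\<lambda>x. \<epsilon> / (\<epsilon>^2 + x^2))"
      by (simp only: set_borel_integral_eq_integral(2)[OF kr] Henstock_Kurzweil_Integration.integral_mult_right)
    also have "\<dots> = \<eta> * arctan (\<delta> / \<epsilon>)"
      using arctan_int[OF e, of \<delta>] d by simp
    also have "\<dots> \<le> \<eta> * 2"
    proof (rule mult_left_mono[OF _ eta0])
      have "arctan (\<delta> / \<epsilon>) < pi / 2" by (rule arctan_ubound)
      then show "arctan (\<delta> / \<epsilon>) \<le> 2" using pi_less_4 by linarith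
    qed
    finally show ?thesis .
  qed
  have A2b: "norm (of_real (gg 0) * (LINT x:{0..\<delta>}|lborel. k x) - \<i> * of_real (gg 0)) \<le> \<bar>gg 0\<bar> * (\<epsilon> / \<delta>)"
  proof -
    define w where "w = \<i> * of_real \<epsilon> / (of_real \<epsilon> - \<i> * of_real \<delta>)"
    have eqA: "of_real (gg 0) * (LINT x:{0..\<delta>}|lborel. k x) - \<i> * of_real (gg 0) = - (of_real (gg 0) * w)"
      unfolding kval w_def by (simp add: algebra_simps)
    have nb: "norm w \<le> \<epsilon> / \<delta>"
    proof -
      have "\<delta> \<le> norm (of_real \<epsilon> - \<i> * of_real \<delta> :: complex)"
        using abs_Im_le_cmod[of "of_real \<epsilon> - \<i> * of_real \<delta>"] d by simp
      then show ?thesis using e d unfolding w_def by (simp add: norm_divide norm_mult frac_le)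
    qed
    have "norm (of_real (gg 0) * (LINT x:{0..\<delta>}|lborel. k x) - \<i> * of_real (gg 0)) = \<bar>gg 0\<bar> * norm w"
      unfolding eqA by (simp only: norm_minus_cancel norm_mult norm_of_real)
    also have "\<dots> \<le> \<bar>gg 0\<bar> * (\<epsilon> / \<delta>)" by (rule mult_left_mono[OF nb]) simp
    finally show ?thesis .
  qed
  have "(LINT x:{0..}|lborel. of_real (gg x) * (of_real \<epsilon> / (of_real \<epsilon> - \<i> * of_real x)^2)) - \<i> * of_real (gg 0)
      = (LINT x:{0..\<delta>}|lborel. of_real (gg x - gg 0) * k x) + (of_real (gg 0) * (LINT x:{0..\<delta>}|lborel. k x) - \<i> * of_real (gg 0)) + (LINT x:{\<delta><..}|lborel. F x)"
    using split Aeq unfolding F_def k_def by simp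
  also have "norm \<dots> \<le> \<eta> * 2 + \<bar>gg 0\<bar> * (\<epsilon> / \<delta>) + (LINT x:{0..}|lborel. \<bar>gg x\<bar>) * (\<epsilon> / \<delta>^2)"
    using A1b A2b Bb norm_triangle_le[OF add_mono[OF norm_triangle_ineq order_refl]]
    by (smt (verit) norm_triangle_ineq)
  finally show ?thesis .
qed


lemma fubini_Q:
  fixes gg :: "real \<Rightarrow> real" and \<epsilon> :: real
  assumes e: "\<epsilon> > 0" and cg: "continuous_on {0..} gg" and ig: "set_integrable lborel {0..} gg"
  defines "GG \<equiv> (\<lambda>t. LINT x:{0..}|lborel. of_real (gg x) * cis (t * x))"
  shows "set_integrable lborel {0..} (\<lambda>t. of_real (t * exp (-(\<epsilon> * t))) * GG t)"
    and "(LINT t:{0..}|lborel. of_real (t * exp (-(\<epsilon> * t))) * GG t)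
         = (LINT x:{0..}|lborel. of_real (gg x) * (1 / (of_real \<epsilon> - \<i> * of_real x)^2))"
proof -
  define hh where "hh x = indicator {0..} x *\<^sub>R gg x" for x :: real
  have hhm[measurable]: "hh \<in> borel_measurable borel"
    unfolding hh_def[abs_def] by (rule borel_measurable_continuous_on_indicator[OF _ cg]) auto
  define c where "c t = indicator {0..} t * (t * exp (-(\<epsilon> * t)))" for t :: real
  have cm[measurable]: "c \<in> borel_measurable borel" unfolding c_def[abs_def] by measurable
  define f where "f t x = complex_of_real (c t) * (of_real (hh x) * cis (t * x))" for t x
  have Pint: "integrable lborel (\<lambda>x. of_real (hh x) * cis (t * x))" for t
  proof -
    have "set_integrable lborel {0..} (\<lambda>x. of_real (gg x) * cis (t * x))"
      by (rule set_integrable_dominated[OF _ _ ig]) (auto intro!: continuous_intros cg simp: norm_mult)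
    moreover have "indicator {0..} x *\<^sub>R (of_real (gg x) * cis (t * x)) = of_real (hh x) * cis (t * x)" for x
      by (simp add: hh_def split: split_indicator)
    ultimately show ?thesis unfolding set_integrable_def by simp
  qed
  have GGeq: "GG t = (\<integral>x. of_real (hh x) * cis (t * x) \<partial>lborel)" for t
    unfolding GG_def set_lebesgue_integral_def
    by (intro Bochner_Integration.integral_cong) (auto simp: hh_def split: split_indicator)
  have ahh: "integrable lborel (\<lambda>x. \<bar>hh x\<bar>)"
    using set_integrable_abs[OF ig] unfolding set_integrable_def hh_def
    by (simp add: abs_mult)
  have cint: "integrable lborel c"
    using texp_int[OF e] unfolding set_integrable_def c_def by simp
  have fint: "integrable (lborel \<Otimes>\<^sub>M lborel) (case_prod f)"
  proof (rule lborel_pair.Fubini_integrable)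
    show "case_prod f \<in> borel_measurable (lborel \<Otimes>\<^sub>M lborel)"
      unfolding f_def[abs_def] cis_conv_exp by measurable
    have "(\<integral>x. norm (f t x) \<partial>lborel) = \<bar>c t\<bar> * (\<integral>x. \<bar>hh x\<bar> \<partial>lborel)" for t
      unfolding f_def by (simp add: norm_mult)
    moreover have "integrable lborel (\<lambda>t. \<bar>c t\<bar> * (\<integral>x. \<bar>hh x\<bar> \<partial>lborel))"
      using integrable_abs[OF cint] by (rule integrable_mult_left)
    ultimately show "integrable lborel (\<lambda>t. \<integral>x. norm (case_prod f (t, x)) \<partial>lborel)" by simp
    show "AE t in lborel. integrable lborel (\<lambda>x. case_prod f (t, x))"
      unfolding f_def using Pint by (auto intro!: integrable_mult_right)
  qed
  have inner1: "(\<integral>x. f t x \<partial>lborel) = of_real (c t) * GG t" for t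
    unfolding f_def GGeq by simp
  have inner2: "(\<integral>t. f t x \<partial>lborel) = indicator {0..} x *\<^sub>R (of_real (gg x) * (1 / (of_real \<epsilon> - \<i> * of_real x)^2))" for x
  proof -
    have "(\<integral>t. f t x \<partial>lborel) = of_real (hh x) * (\<integral>t. indicator {0..} t *\<^sub>R (of_real (t * exp (-(\<epsilon> * t))) * cis (t * x)) \<partial>lborel)"
    proof -
      define gf where "gf t = indicator {0..} t *\<^sub>R (of_real (t * exp (-(\<epsilon> * t))) * cis (t * x))" for t
      have "(\<lambda>t. f t x) = (\<lambda>t. of_real (hh x) * gf t)"
        by (rule ext) (simp add: f_def c_def gf_def split: split_indicator)
      then have "(\<integral>t. f t x \<partial>lborel) = (\<integral>t. of_real (hh x) * gf t \<partial>lborel)" by simp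
      also have "\<dots> = of_real (hh x) * (\<integral>t. gf t \<partial>lborel)" by (rule Bochner_Integration.integral_mult_right_zero)
      finally show ?thesis unfolding gf_def .
    qed
    also have "\<dots> = of_real (hh x) * (1 / (of_real \<epsilon> - \<i> * of_real x)^2)"
      using inner_val[OF e, of x] unfolding set_lebesgue_integral_def by simp
    finally show ?thesis by (simp add: hh_def split: split_indicator)
  qed
  have int1: "integrable lborel (\<lambda>t. \<integral>x. f t x \<partial>lborel)"
    using lborel_pair.integrable_fst[OF fint] .
  then show I: "set_integrable lborel {0..} (\<lambda>t. of_real (t * exp (-(\<epsilon> * t))) * GG t)"
    unfolding set_integrable_def inner1 c_def by (simp add: scaleR_conv_of_real mult.assoc)
  have "(\<integral>x. (\<integral>t. f t x \<partial>lborel) \<partial>lborel) = (\<integral>t. (\<integral>x. f t x \<partial>lborel) \<partial>lborel)"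
    by (rule lborel_pair.Fubini_integral[OF fint])
  then show "(LINT t:{0..}|lborel. of_real (t * exp (-(\<epsilon> * t))) * GG t)
         = (LINT x:{0..}|lborel. of_real (gg x) * (1 / (of_real \<epsilon> - \<i> * of_real x)^2))"
    unfolding inner1 inner2 set_lebesgue_integral_def c_def by (simp add: scaleR_conv_of_real mult.assoc)
qed


lemma indicator_int:
  fixes T K :: real assumes T: "T \<ge> 0"
  shows "set_integrable lborel {0..} (\<lambda>t. indicator {0..T} t * K)"
    and "(LINT t:{0..}|lborel. indicator {0..T} t * K) = T * K"
proof -
  have eq: "indicator {0..} t *\<^sub>R (indicator {0..T} t * K) = indicator {0..T} t *\<^sub>R K" for t :: real
    by (simp split: split_indicator)
  have I: "set_integrable lborel {0..T} (\<lambda>t. K)" by (rule set_integrable_cont_Icc) simp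
  then show "set_integrable lborel {0..} (\<lambda>t. indicator {0..T} t * K)"
    unfolding set_integrable_def eq .
  have "(LINT t:{0..}|lborel. indicator {0..T} t * K) = (LINT t:{0..T}|lborel. K)"
    unfolding set_lebesgue_integral_def eq ..
  also have "\<dots> = integral {0..T} (\<lambda>t. K)" by (rule set_borel_integral_eq_integral(2)[OF I])
  also have "\<dots> = T * K" using T by simp
  finally show "(LINT t:{0..}|lborel. indicator {0..T} t * K) = T * K" .
qed

lemma abel_zero:
  fixes gg :: "real \<Rightarrow> real"
  assumes cg: "continuous_on {0..} gg" and bg: "\<And>x. x \<ge> 0 \<Longrightarrow> \<bar>gg x\<bar> \<le> B"
    and ig: "set_integrable lborel {0..} gg"
    and lim: "((\<lambda>t. - of_real (gg 0) - \<i> * of_real t * (LINT x:{0..}|lborel. of_real (gg x) * cis (t * x))) \<longlongrightarrow> L) at_top"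
  shows "L = 0"
proof -
  define GG where "GG t = (LINT x:{0..}|lborel. of_real (gg x) * cis (t * x))" for t
  define \<Psi> where "\<Psi> t = - of_real (gg 0) - \<i> * of_real t * GG t" for t
  define A1 where "A1 = (LINT x:{0..}|lborel. \<bar>gg x\<bar>)"
  have A1pos: "A1 \<ge> 0" unfolding A1_def by (rule set_integral_nonneg') auto
  have GGb: "norm (GG t) \<le> A1" for t
  proof -
    have I: "set_integrable lborel {0..} (\<lambda>x. of_real (gg x) * cis (t * x))"
      by (rule set_integrable_dominated[OF _ _ ig]) (auto intro!: continuous_intros cg simp: norm_mult)
    have "norm (GG t) \<le> (LINT x:{0..}|lborel. norm (of_real (gg x) * cis (t * x)))"
      unfolding GG_def by (rule set_integral_norm_le[OF I])
    also have "\<dots> = A1" unfolding A1_def by (simp add: norm_mult)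
    finally show ?thesis .
  qed
  have lim': "(\<Psi> \<longlongrightarrow> L) at_top" using lim unfolding \<Psi>_def[abs_def] GG_def[abs_def] .
  have main: "norm L \<le> 6 * \<eta>" if eta: "\<eta> > 0" for \<eta>
  proof -
    obtain T0 where T0: "\<And>t. t \<ge> T0 \<Longrightarrow> dist (\<Psi> t) L < \<eta>"
      using lim' eta unfolding tendsto_iff eventually_at_top_linorder by blast
    define T where "T = max T0 0"
    have T: "T \<ge> 0" "\<And>t. t \<ge> T \<Longrightarrow> norm (\<Psi> t - L) \<le> \<eta>"
      using T0 by (auto simp: T_def dist_norm less_imp_le)
    obtain d where d: "d > 0" "\<And>x'. x' \<in> {0..} \<Longrightarrow> dist x' 0 < d \<Longrightarrow> dist (gg x') (gg 0) < \<eta>"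
      using cg eta unfolding continuous_on_iff by (metis atLeast_iff order_refl)
    define \<delta> where "\<delta> = d / 2"
    have dl: "\<delta> > 0" using d by (simp add: \<delta>_def)
    have hd: "\<bar>gg x - gg 0\<bar> \<le> \<eta>" if "x \<in> {0..\<delta>}" for x
      using d(2)[of x] that d(1) by (auto simp: \<delta>_def dist_real_def)
    define C where "C = \<bar>gg 0\<bar> + T * A1 + norm L"
    have Cpos: "C \<ge> 0" using A1pos T by (simp add: C_def)
    define \<epsilon> where "\<epsilon> = \<eta> / (T * C + \<bar>gg 0\<bar> / \<delta> + A1 / \<delta>^2 + 1)"
    have den: "T * C + \<bar>gg 0\<bar> / \<delta> + A1 / \<delta>^2 + 1 > 0"
    proof -
      have "0 \<le> T * C" using T(1) Cpos by simp
      moreover have "0 \<le> \<bar>gg 0\<bar> / \<delta>" using dl by simp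
      moreover have "0 \<le> A1 / \<delta>^2" using A1pos by simp
      ultimately show ?thesis by linarith
    qed
    have e: "\<epsilon> > 0" using eta den by (simp add: \<epsilon>_def)
    have e1: "\<epsilon> * (T * C) \<le> \<eta>" and e2: "\<bar>gg 0\<bar> * (\<epsilon> / \<delta>) \<le> \<eta>" and e3: "A1 * (\<epsilon> / \<delta>^2) \<le> \<eta>"
    proof -
      have key: "\<epsilon> * P \<le> \<eta>" if "0 \<le> P" "P \<le> T * C + \<bar>gg 0\<bar> / \<delta> + A1 / \<delta>^2 + 1" for P
      proof -
        have "\<epsilon> * P \<le> \<epsilon> * (T * C + \<bar>gg 0\<bar> / \<delta> + A1 / \<delta>^2 + 1)" using that e by (intro mult_left_mono) auto
        also have "\<dots> = \<eta>" using den by (simp add: \<epsilon>_def)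
        finally show ?thesis .
      qed
      show "\<epsilon> * (T * C) \<le> \<eta>" by (rule key) (use T Cpos A1pos dl in auto)
      have "\<epsilon> * (\<bar>gg 0\<bar> / \<delta>) \<le> \<eta>" by (rule key) (use T Cpos A1pos dl in auto)
      then show "\<bar>gg 0\<bar> * (\<epsilon> / \<delta>) \<le> \<eta>" by (simp add: field_simps)
      have "\<epsilon> * (A1 / \<delta>^2) \<le> \<eta>" by (rule key) (use T Cpos A1pos dl in auto)
      then show "A1 * (\<epsilon> / \<delta>^2) \<le> \<eta>" by (simp add: field_simps)
    qed
    define E where "E t = \<epsilon> * exp (-(\<epsilon> * t))" for t
    have Eint: "set_integrable lborel {0..} E" unfolding E_def using exp_int[OF e] by (rule set_integrable_mult_right)
    have Eval: "(LINT t:{0..}|lborel. E t) = 1" unfolding E_def by (rule exp_val[OF e])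
    have EintC: "set_integrable lborel {0..} (\<lambda>t. complex_of_real (E t))"
    proof -
      have "integrable lborel (\<lambda>x. complex_of_real (indicator {0..} x * E x))"
        by (rule integrable_of_real) (use Eint in \<open>simp add: set_integrable_def\<close>)
      then show ?thesis by (simp add: set_integrable_def scaleR_conv_of_real)
    qed
    have EvalC: "(LINT t:{0..}|lborel. complex_of_real (E t)) = 1"
      by (simp add: set_integral_complex_of_real Eval)
    note Q = fubini_Q[OF e cg ig]
    have Qint: "set_integrable lborel {0..} (\<lambda>t. of_real (t * exp (-(\<epsilon> * t))) * GG t)"
      using Q(1) unfolding GG_def[abs_def] .
    have Qval: "(LINT t:{0..}|lborel. of_real (t * exp (-(\<epsilon> * t))) * GG t)
         = (LINT x:{0..}|lborel. of_real (gg x) * (1 / (of_real \<epsilon> - \<i> * of_real x)^2))"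
      using Q(2) unfolding GG_def[abs_def] .
    define X where "X = (LINT x:{0..}|lborel. of_real (gg x) * (of_real \<epsilon> / (of_real \<epsilon> - \<i> * of_real x)^2))"
    have Xeq: "X = of_real \<epsilon> * (LINT x:{0..}|lborel. of_real (gg x) * (1 / (of_real \<epsilon> - \<i> * of_real x)^2))"
    proof -
      have "X = (LINT x:{0..}|lborel. of_real \<epsilon> * (of_real (gg x) * (1 / (of_real \<epsilon> - \<i> * of_real x)^2)))"
        unfolding X_def by (simp add: field_simps)
      also have "\<dots> = of_real \<epsilon> * (LINT x:{0..}|lborel. of_real (gg x) * (1 / (of_real \<epsilon> - \<i> * of_real x)^2))"
        by (rule set_integral_mult_right)
      finally show ?thesis .
    qed
    define W where "W t = of_real (E t) * \<Psi> t" for t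
    have Wsplit: "W t = (- of_real (gg 0)) * of_real (E t) + (- \<i> * of_real \<epsilon>) * (of_real (t * exp (-(\<epsilon> * t))) * GG t)" for t
      by (simp add: W_def \<Psi>_def E_def algebra_simps)
    have I1: "set_integrable lborel {0..} (\<lambda>t. (- of_real (gg 0)) * complex_of_real (E t))"
      using EintC by (rule set_integrable_mult_right)
    have I2: "set_integrable lborel {0..} (\<lambda>t. (- \<i> * of_real \<epsilon>) * (of_real (t * exp (-(\<epsilon> * t))) * GG t))"
      using Qint by (rule set_integrable_mult_right)
    have Wint: "set_integrable lborel {0..} W" unfolding Wsplit[abs_def] using I1 I2 by (rule set_integral_add(1))
    have Mval: "(LINT t:{0..}|lborel. W t) = - of_real (gg 0) - \<i> * X"
    proof -
      have "(LINT t:{0..}|lborel. W t) = (LINT t:{0..}|lborel. (- of_real (gg 0)) * complex_of_real (E t))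
           + (LINT t:{0..}|lborel. (- \<i> * of_real \<epsilon>) * (of_real (t * exp (-(\<epsilon> * t))) * GG t))"
        unfolding Wsplit[abs_def] by (rule set_integral_add(2)[OF I1 I2])
      also have "\<dots> = - of_real (gg 0) - \<i> * X"
        unfolding set_integral_mult_right EvalC Qval Xeq by simp
      finally show ?thesis .
    qed
    have HML: "norm ((LINT t:{0..}|lborel. W t) - L) \<le> 2 * \<eta>"
    proof -
      have IL: "set_integrable lborel {0..} (\<lambda>t. complex_of_real (E t) * L)"
        using EintC by (rule set_integrable_mult_left)
      have ILv: "(LINT t:{0..}|lborel. complex_of_real (E t) * L) = L"
        using EvalC by (simp add: set_integral_mult_left)
      have D: "set_integrable lborel {0..} (\<lambda>t. W t - complex_of_real (E t) * L)"
        using Wint IL by (rule set_integral_diff(1))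
      have "(LINT t:{0..}|lborel. W t) - L = (LINT t:{0..}|lborel. W t - complex_of_real (E t) * L)"
        using set_integral_diff(2)[OF Wint IL] ILv by simp
      then have "norm ((LINT t:{0..}|lborel. W t) - L) \<le> (LINT t:{0..}|lborel. norm (W t - complex_of_real (E t) * L))"
        using set_integral_norm_le[OF D] by simp
      also have "\<dots> \<le> (LINT t:{0..}|lborel. \<eta> * E t + indicator {0..T} t * (\<epsilon> * C))"
      proof (rule set_integral_mono)
        show "set_integrable lborel {0..} (\<lambda>t. norm (W t - complex_of_real (E t) * L))"
          by (rule set_integrable_norm'[OF D])
        show "set_integrable lborel {0..} (\<lambda>t. \<eta> * E t + indicator {0..T} t * (\<epsilon> * C))"
          by (rule set_integral_add(1)[OF set_integrable_mult_right[OF Eint] indicator_int(1)[OF T(1)]])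
        fix t :: real assume t: "t \<in> {0..}"
        have Ept: "E t \<ge> 0" by (simp add: E_def) (use e in simp)
        have nw: "norm (W t - complex_of_real (E t) * L) = E t * norm (\<Psi> t - L)"
          by (simp add: W_def Ept right_diff_distrib[symmetric] norm_mult)
        show "norm (W t - complex_of_real (E t) * L) \<le> \<eta> * E t + indicator {0..T} t * (\<epsilon> * C)"
        proof (cases "t \<ge> T")
          case True
          then have "E t * norm (\<Psi> t - L) \<le> E t * \<eta>" using T(2) Ept by (intro mult_left_mono) auto
          moreover have "0 \<le> indicator {0..T} t * (\<epsilon> * C)" using e Cpos by simp
          ultimately show ?thesis unfolding nw by (simp add: mult.commute)
        next
          case False
          then have tT: "t \<in> {0..T}" using t by auto
          have "norm (\<Psi> t - L) \<le> norm (\<Psi> t) + norm L" by (rule norm_triangle_ineq4)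
          also have "norm (\<Psi> t) \<le> \<bar>gg 0\<bar> + t * A1"
          proof -
            have "norm (\<Psi> t) \<le> norm (of_real (gg 0) :: complex) + norm (\<i> * of_real t * GG t)"
              unfolding \<Psi>_def by (rule norm_triangle_ineq4[of "- of_real (gg 0)", simplified])
            also have "norm (\<i> * of_real t * GG t) = t * norm (GG t)" using t by (simp add: norm_mult)
            also have "t * norm (GG t) \<le> t * A1" using t by (intro mult_left_mono GGb) auto
            finally show ?thesis by simp
          qed
          also have "t * A1 \<le> T * A1" using tT A1pos by (intro mult_right_mono) auto
          finally have nC: "norm (\<Psi> t - L) \<le> C" by (simp add: C_def)
          have "E t \<le> \<epsilon>" using t e by (simp add: E_def)
          then have "E t * norm (\<Psi> t - L) \<le> \<epsilon> * C" using nC Ept e by (intro mult_mono) auto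
          moreover have "0 \<le> \<eta> * E t" using eta Ept by simp
          ultimately show ?thesis unfolding nw using tT by simp
        qed
      qed
      also have "\<dots> = \<eta> * (LINT t:{0..}|lborel. E t) + T * (\<epsilon> * C)"
        using set_integral_add(2)[OF set_integrable_mult_right[OF Eint] indicator_int(1)[OF T(1)]]
              indicator_int(2)[OF T(1)] by simp
      also have "\<dots> \<le> 2 * \<eta>" using Eval e1 by (simp add: mult_ac)
      finally show ?thesis .
    qed
    have Mb: "norm (LINT t:{0..}|lborel. W t) \<le> 4 * \<eta>"
    proof -
      have "- of_real (gg 0) - \<i> * X = - \<i> * (X - \<i> * of_real (gg 0))" by (simp add: algebra_simps)
      then have "norm (LINT t:{0..}|lborel. W t) = norm (X - \<i> * of_real (gg 0))"
        unfolding Mval by (simp add: norm_mult)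
      also have "\<dots> \<le> \<eta> * 2 + \<bar>gg 0\<bar> * (\<epsilon> / \<delta>) + A1 * (\<epsilon> / \<delta>^2)"
        unfolding X_def A1_def by (rule xside[OF cg ig e dl hd])
      also have "\<dots> \<le> 4 * \<eta>" using e2 e3 by simp
      finally show ?thesis .
    qed
    have "norm L \<le> norm ((LINT t:{0..}|lborel. W t) - L) + norm (LINT t:{0..}|lborel. W t)"
      by (metis norm_minus_commute norm_triangle_sub add.commute)
    then show ?thesis using HML Mb by simp
  qed
  show "L = 0"
  proof (rule ccontr)
    assume "L \<noteq> 0"
    then have "norm L > 0" by simp
    from main[of "norm L / 12"] this show False by simp
  qed
qed


locale cor2 =
  fixes n :: nat and \<phi> :: "real \<Rightarrow> real"
  assumes cont: "continuous_on {0..} \<phi>"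
    and bv: "\<And>m. m \<le> n \<Longrightarrow> bounded_variation_on {0..} (\<lambda>x. x ^ m * \<phi> x)"
    and little_o: "\<phi> \<in> o[at_top](\<lambda>x. 1 / x ^ n)"
    and L1: "set_integrable lborel {0<..} (\<lambda>x. x ^ n * \<phi> x)"
begin

definition g :: "nat \<Rightarrow> real \<Rightarrow> real" where "g j x = x ^ j * \<phi> x"
definition G :: "nat \<Rightarrow> real \<Rightarrow> complex" where
  "G j t = (LINT x:{0..}|lborel. of_real (g j x) * cis (t * x))"

lemma g_cont: "continuous_on {0..} (g j)"
  unfolding g_def by (intro continuous_intros cont)

lemma gn_tend: "((\<lambda>x. x ^ n * \<phi> x) \<longlongrightarrow> 0) at_top"
proof -
  have "((\<lambda>x. \<phi> x / (1 / x ^ n)) \<longlongrightarrow> 0) at_top" by (rule smalloD_tendsto[OF little_o])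
  then show ?thesis by (simp add: mult.commute)
qed

lemma g_le: assumes "j \<le> n" "x \<ge> 1" shows "\<bar>g j x\<bar> \<le> \<bar>g n x\<bar>"
proof -
  have "x ^ j \<le> x ^ n" by (rule power_increasing[OF assms(1,2)])
  then show ?thesis using assms(2) unfolding g_def by (simp add: abs_mult mult_right_mono)
qed

lemma g_tend: assumes "j \<le> n" shows "(g j \<longlongrightarrow> 0) at_top"
proof (rule Lim_null_comparison)
  show "\<forall>\<^sub>F x in at_top. norm (g j x) \<le> \<bar>x ^ n * \<phi> x\<bar>"
    using eventually_ge_at_top[of 1]
  proof eventually_elim
    case (elim x)
    show ?case using g_le[OF assms elim] by (simp add: g_def)
  qed
  show "((\<lambda>x. \<bar>x ^ n * \<phi> x\<bar>) \<longlongrightarrow> 0) at_top" using tendsto_rabs_zero[OF gn_tend] .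
qed

lemma g_bdd: assumes "j \<le> n" shows "\<exists>B. \<forall>x\<ge>0. \<bar>g j x\<bar> \<le> B"
proof -
  obtain B where B: "\<And>k (x::nat\<Rightarrow>real). (\<forall>i\<le>k. x i \<in> {0..}) \<and> (\<forall>i<k. x i < x (Suc i)) \<Longrightarrow>
        (\<Sum>i<k. \<bar>g j (x (Suc i)) - g j (x i)\<bar>) \<le> B"
    using bv[OF assms] unfolding bounded_variation_on_def g_def by blast
  have "\<bar>g j y\<bar> \<le> \<bar>g j 0\<bar> + \<bar>B\<bar>" if y: "y \<ge> 0" for y
  proof (cases "y = 0")
    case True then show ?thesis by simp
  next
    case False
    have "(\<Sum>i<1. \<bar>g j ((\<lambda>i. if i = 0 then 0 else y) (Suc i)) - g j ((\<lambda>i. if i = 0 then 0 else y) i)\<bar>) \<le> B"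
      by (rule B) (use y False in auto)
    then have "\<bar>g j y - g j 0\<bar> \<le> B" by simp
    then show ?thesis by linarith
  qed
  then show ?thesis by blast
qed

lemma g_int: assumes "j \<le> n" shows "set_integrable lborel {0..} (g j)"
proof -
  have a: "set_integrable lborel {0..1} (g j)"
    by (rule set_integrable_cont_Icc) (rule continuous_on_subset[OF g_cont], auto)
  have gn: "set_integrable lborel {1..} (g n)"
  proof -
    have "set_integrable lborel {0<..} (g n)" unfolding g_def[abs_def] using L1 by simp
    then show ?thesis by (rule set_integrable_subset) auto
  qed
  have b: "set_integrable lborel {1..} (g j)"
    by (rule set_integrable_dominated[OF _ _ gn]) (auto intro: continuous_on_subset[OF g_cont] g_le[OF assms])
  have "set_integrable lborel ({0..1} \<union> {1..}) (g j)"
    by (rule set_integrable_Un[OF a b]) auto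
  moreover have "{0..1} \<union> {1..} = {0::real..}" by auto
  ultimately show ?thesis by simp
qed

lemma Gf_int: assumes "j \<le> n" shows "set_integrable lborel {0..} (\<lambda>x. of_real (g j x) * cis (t * x))"
  by (rule set_integrable_dominated[OF _ _ g_int[OF assms]])
     (auto intro!: continuous_intros g_cont simp: norm_mult)

lemma G_lim: assumes "j \<le> n"
  shows "((\<lambda>b. integral {0..b} (\<lambda>x. of_real (g j x) * cis (t * x))) \<longlongrightarrow> G j t) at_top"
  unfolding G_def by (rule HK_tendsto_LINT[OF Gf_int[OF assms]])

lemma cis_RS: assumes "j \<le> n"
  shows "RS_integral_0_inf (\<lambda>x. cis (t * x)) (g j) = - of_real (g j 0) - \<i> * of_real t * G j t"
proof -
  have "RS_integral_0_inf (\<lambda>x. cis (t * x)) (g j) = 0 - cis (t * 0) * of_real (g j 0) - (\<i> * of_real t) * G j t"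
  proof (rule RS0inf[where f'="\<lambda>y. (\<i> * of_real t) * cis (t * y)"])
    show "((\<lambda>x. cis (t * x)) has_vector_derivative \<i> * complex_of_real t * cis (t * y)) (at y)" for y
      by (rule cis_vderiv)
    show "continuous_on UNIV (\<lambda>y. \<i> * complex_of_real t * cis (t * y))"
      by (intro continuous_intros)
    show "continuous_on {0..} (g j)" by (rule g_cont)
    have "((\<lambda>b. norm (cis (t * b) * complex_of_real (g j b))) \<longlongrightarrow> 0) at_top"
      using tendsto_rabs_zero[OF g_tend[OF assms]] by (simp add: norm_mult)
    then show "((\<lambda>b. cis (t * b) * complex_of_real (g j b)) \<longlongrightarrow> 0) at_top"
      by (simp add: tendsto_norm_zero_iff)
    have "integral {0..b} (\<lambda>y. \<i> * complex_of_real t * cis (t * y) * complex_of_real (g j y))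
        = (\<i> * complex_of_real t) * integral {0..b} (\<lambda>y. complex_of_real (g j y) * cis (t * y))" for b
      using Henstock_Kurzweil_Integration.integral_mult_right[where c="\<i> * complex_of_real t" and S="{0..b}" and f="\<lambda>y. complex_of_real (g j y) * cis (t * y)"]
      by (simp add: mult_ac)
    then show "((\<lambda>b. integral {0..b} (\<lambda>y. \<i> * complex_of_real t * cis (t * y) * complex_of_real (g j y))) \<longlongrightarrow> \<i> * complex_of_real t * G j t) at_top"
      by (simp add: tendsto_mult_left G_lim[OF assms])
  qed
  then show ?thesis by simp
qed

end


lemma cis_taylor1: "norm (cis y - 1 - \<i> * of_real y) \<le> y^2 / 2"
  using iexp_approx1[of y 1] by (simp add: cis_conv_exp numeral_2_eq_2 diff_diff_eq)

lemma cis_taylor2: "norm (cis y - 1 - \<i> * of_real y) \<le> 2 * \<bar>y\<bar>"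
  using iexp_approx2[of y 1] by (simp add: cis_conv_exp diff_diff_eq)

lemma set_integral_div: "(LINT x:S|M. f x / (c::real)) = (LINT x:S|M. f x) / c"
  unfolding set_lebesgue_integral_def by simp

lemma dom_conv_at0:
  fixes F :: "real \<Rightarrow> real \<Rightarrow> real" and w :: "real \<Rightarrow> real"
  assumes meas: "\<And>h. set_borel_measurable lborel S (F h)"
    and w: "set_integrable lborel S w"
    and bound: "\<And>h x. x \<in> S \<Longrightarrow> \<bar>F h x\<bar> \<le> w x"
    and lim: "\<And>x. x \<in> S \<Longrightarrow> ((\<lambda>h. F h x) \<longlongrightarrow> 0) (at 0)"
  shows "((\<lambda>h. LINT x:S|lborel. F h x) \<longlongrightarrow> 0) (at 0)"
  unfolding tendsto_at_iff_sequentially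
proof (intro allI impI)
  fix X :: "nat \<Rightarrow> real" assume X: "\<forall>i. X i \<in> UNIV - {0}" "X \<longlonglongrightarrow> 0"
  define s where "s = (\<lambda>i x. indicator S x *\<^sub>R F (X i) x)"
  have "(\<lambda>i. integral\<^sup>L lborel (s i)) \<longlonglongrightarrow> integral\<^sup>L lborel (\<lambda>x::real. 0::real)"
  proof (rule Bochner_Integration.integral_dominated_convergence[where w="\<lambda>x. indicator S x *\<^sub>R w x"])
    show "(\<lambda>x::real. 0::real) \<in> borel_measurable lborel" by simp
    show "s i \<in> borel_measurable lborel" for i
      using meas unfolding set_borel_measurable_def s_def by simp
    show "integrable lborel (\<lambda>x. indicator S x *\<^sub>R w x)" using w unfolding set_integrable_def .
    show "AE x in lborel. (\<lambda>i. s i x) \<longlonglongrightarrow> 0"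
    proof (rule AE_I2)
      fix x show "(\<lambda>i. s i x) \<longlonglongrightarrow> 0"
      proof (cases "x \<in> S")
        case True
        have "((\<lambda>h. F h x) \<circ> X) \<longlonglongrightarrow> 0"
          using lim[OF True] X unfolding tendsto_at_iff_sequentially by blast
        then show ?thesis using True by (simp add: o_def s_def)
      qed (simp add: s_def)
    qed
    show "AE x in lborel. norm (s i x) \<le> indicator S x *\<^sub>R w x" for i
      using bound by (auto simp: s_def split: split_indicator)
  qed
  then show "((\<lambda>h. LINT x:S|lborel. F h x) \<circ> X) \<longlonglongrightarrow> 0"
    by (simp add: set_lebesgue_integral_def o_def s_def)
qed

lemma poly_cis_vderiv:
  "((\<lambda>x. (\<i> * of_real x) ^ m * cis (t * x)) has_vector_derivative
     (of_nat m * \<i> * (\<i> * of_real x) ^ (m - 1) + (\<i> * of_real x) ^ m * (\<i> * of_real t)) * cis (t * x)) (at x)"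
proof -
  have "((\<lambda>z. (\<i> * z) ^ m * exp (\<i> * of_real t * z)) has_field_derivative
     (of_nat m * \<i> * (\<i> * of_real x) ^ (m - 1) + (\<i> * of_real x) ^ m * (\<i> * of_real t)) * exp (\<i> * of_real t * of_real x)) (at (of_real x))"
    apply (rule derivative_eq_intros refl)+
    apply (simp add: ring_distribs mult_ac)
    done
  from has_vector_derivative_real_field[OF this] show ?thesis by (simp add: cis_conv_exp mult_ac)
qed

context cor2 begin

lemma Phin_RS: assumes n1: "n \<ge> 1"
  shows "RS_integral_0_inf (\<lambda>x. (\<i> * of_real x) ^ n * cis (t * x)) \<phi>
        = - (of_nat n * \<i> ^ n * G (n - 1) t + \<i> ^ Suc n * of_real t * G n t)"
proof -
  obtain m where m: "n = Suc m" using n1 by (cases n) auto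
  define c1 where "c1 = of_nat n * \<i> ^ n"
  define c2 where "c2 = \<i> ^ Suc n * of_real t"
  define f' where "f' y = (of_nat n * \<i> * (\<i> * of_real y) ^ (n - 1) + (\<i> * of_real y) ^ n * (\<i> * of_real t)) * cis (t * y)" for y
  have pw: "f' y * of_real (\<phi> y) = c1 * (of_real (g (n - 1) y) * cis (t * y)) + c2 * (of_real (g n y) * cis (t * y))" for y
    unfolding f'_def c1_def c2_def g_def m by (simp add: power_mult_distrib algebra_simps)
  have "RS_integral_0_inf (\<lambda>x. (\<i> * of_real x) ^ n * cis (t * x)) \<phi> = 0 - (\<i> * of_real 0) ^ n * cis (t * 0) * of_real (\<phi> 0) - (c1 * G (n - 1) t + c2 * G n t)"
  proof (rule RS0inf[where f'=f'])
    show "((\<lambda>x. (\<i> * of_real x) ^ n * cis (t * x)) has_vector_derivative f' y) (at y)" for y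
      unfolding f'_def by (rule poly_cis_vderiv)
    show "continuous_on UNIV f'" unfolding f'_def by (intro continuous_intros)
    show "continuous_on {0..} \<phi>" by (rule cont)
    show "((\<lambda>b. (\<i> * complex_of_real b) ^ n * cis (t * b) * complex_of_real (\<phi> b)) \<longlongrightarrow> 0) at_top"
    proof (rule Lim_null_comparison)
      show "\<forall>\<^sub>F b in at_top. norm ((\<i> * complex_of_real b) ^ n * cis (t * b) * complex_of_real (\<phi> b)) \<le> \<bar>b ^ n * \<phi> b\<bar>"
        using eventually_ge_at_top[of 0]
        by eventually_elim (simp add: norm_mult norm_power abs_mult)
      show "((\<lambda>x. \<bar>x ^ n * \<phi> x\<bar>) \<longlongrightarrow> 0) at_top" using tendsto_rabs_zero[OF gn_tend] .
    qed
    have "integral {0..b} (\<lambda>y. f' y * complex_of_real (\<phi> y))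
        = c1 * integral {0..b} (\<lambda>y. of_real (g (n - 1) y) * cis (t * y)) + c2 * integral {0..b} (\<lambda>y. of_real (g n y) * cis (t * y))" for b
    proof -
      have i1: "(\<lambda>y. of_real (g k y) * cis (t * y)) integrable_on {0..b}" for k
        by (intro integrable_continuous_interval continuous_intros continuous_on_subset[OF g_cont]) auto
      show ?thesis unfolding pw
        by (subst integral_add) (use i1 in \<open>auto intro: integrable_on_mult_right\<close>)
    qed
    moreover have "((\<lambda>b. c1 * integral {0..b} (\<lambda>y. of_real (g (n - 1) y) * cis (t * y)) + c2 * integral {0..b} (\<lambda>y. of_real (g n y) * cis (t * y))) \<longlongrightarrow> c1 * G (n - 1) t + c2 * G n t) at_top"
      by (intro tendsto_intros G_lim) auto
    ultimately show "((\<lambda>b. integral {0..b} (\<lambda>y. f' y * complex_of_real (\<phi> y))) \<longlongrightarrow> c1 * G (n - 1) t + c2 * G n t) at_top"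
      by simp
  qed
  then show ?thesis using n1 by (simp add: c1_def c2_def)
qed

end


context cor2 begin

lemma G_deriv:
  assumes j: "j < n"
  shows "(G j has_vector_derivative \<i> * G (Suc j) t) (at t)"
proof -
  define D where "D = \<i> * G (Suc j) t"
  define F where "F h x = \<bar>g j x\<bar> * norm (cis (h * x) - 1 - \<i> * of_real (h * x)) / \<bar>h\<bar>" for h x
  have jn: "j \<le> n" "Suc j \<le> n" using j by auto
  have key: "norm (G j (t + h) - G j t - h *\<^sub>R D) / norm h \<le> (LINT x:{0..}|lborel. F h x)" for h
  proof (cases "h = 0")
    case True then show ?thesis by (simp add: F_def)
  next
    case False
    define P where "P x = of_real (g j x) * cis (t * x) * (cis (h * x) - 1 - \<i> * of_real (h * x))" for x
    note I1 = Gf_int[OF jn(1), of "t + h"]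
    note I2 = Gf_int[OF jn(1), of t]
    have I3: "set_integrable lborel {0..} (\<lambda>x. (of_real h * \<i>) * (of_real (g (Suc j) x) * cis (t * x)))"
      using Gf_int[OF jn(2), of t] by (rule set_integrable_mult_right)
    have eqf: "of_real (g j x) * cis ((t + h) * x) - of_real (g j x) * cis (t * x) - (of_real h * \<i>) * (of_real (g (Suc j) x) * cis (t * x)) = P x" for x
    proof -
      have "cis ((t + h) * x) = cis (t * x) * cis (h * x)" by (simp add: cis_mult distrib_right)
      then show ?thesis unfolding P_def g_def by (simp add: algebra_simps)
    qed
    have I12: "set_integrable lborel {0..} (\<lambda>x. of_real (g j x) * cis ((t + h) * x) - of_real (g j x) * cis (t * x))"
      using I1 I2 by (rule set_integral_diff(1))
    have IP0: "set_integrable lborel {0..} (\<lambda>x. of_real (g j x) * cis ((t + h) * x) - of_real (g j x) * cis (t * x) - (of_real h * \<i>) * (of_real (g (Suc j) x) * cis (t * x)))"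
      using I12 I3 by (rule set_integral_diff(1))
    then have IP: "set_integrable lborel {0..} P" unfolding eqf .
    have "G j (t + h) - G j t - h *\<^sub>R D = (LINT x:{0..}|lborel. of_real (g j x) * cis ((t + h) * x) - of_real (g j x) * cis (t * x) - (of_real h * \<i>) * (of_real (g (Suc j) x) * cis (t * x)))"
      unfolding set_integral_diff(2)[OF I12 I3] set_integral_diff(2)[OF I1 I2] set_integral_mult_right
      by (simp add: G_def D_def scaleR_conv_of_real mult_ac)
    also have "\<dots> = (LINT x:{0..}|lborel. P x)" unfolding eqf ..
    finally have "norm (G j (t + h) - G j t - h *\<^sub>R D) \<le> (LINT x:{0..}|lborel. norm (P x))"
      using set_integral_norm_le[OF IP] by simp
    also have "(LINT x:{0..}|lborel. norm (P x)) = (LINT x:{0..}|lborel. \<bar>g j x\<bar> * norm (cis (h * x) - 1 - \<i> * of_real (h * x)))"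
      unfolding P_def by (simp add: norm_mult)
    finally show ?thesis
      by (simp add: F_def set_integral_div divide_right_mono)
  qed
  have lim: "((\<lambda>h. LINT x:{0..}|lborel. F h x) \<longlongrightarrow> 0) (at 0)"
  proof (rule dom_conv_at0[where w="\<lambda>x. 2 * \<bar>g (Suc j) x\<bar>"])
    show "set_borel_measurable lborel {0..} (F h)" for h
    proof -
      have "continuous_on {0..} (F h)" unfolding F_def by (cases "h = 0") (auto intro!: continuous_intros g_cont)
      from borel_measurable_continuous_on_indicator[OF _ this] show ?thesis
        unfolding set_borel_measurable_def by simp
    qed
    show "set_integrable lborel {0..} (\<lambda>x. 2 * \<bar>g (Suc j) x\<bar>)"
      using set_integrable_abs[OF g_int[OF jn(2)]] by (rule set_integrable_mult_right)
    show "\<bar>F h x\<bar> \<le> 2 * \<bar>g (Suc j) x\<bar>" if x: "x \<in> {0..}" for h x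
    proof (cases "h = 0")
      case True then show ?thesis by (simp add: F_def)
    next
      case False
      have "\<bar>F h x\<bar> = \<bar>g j x\<bar> * norm (cis (h * x) - 1 - \<i> * of_real (h * x)) / \<bar>h\<bar>"
        by (simp add: F_def)
      also have "\<dots> \<le> \<bar>g j x\<bar> * (2 * \<bar>h * x\<bar>) / \<bar>h\<bar>"
        by (intro divide_right_mono mult_left_mono cis_taylor2) auto
      also have "\<dots> = 2 * \<bar>g (Suc j) x\<bar>" using False x by (simp add: g_def abs_mult)
      finally show ?thesis .
    qed
    show "((\<lambda>h. F h x) \<longlongrightarrow> 0) (at 0)" if x: "x \<in> {0..}" for x
    proof (rule Lim_null_comparison)
      show "\<forall>\<^sub>F h in at 0. norm (F h x) \<le> \<bar>g j x\<bar> * x^2 / 2 * \<bar>h\<bar>"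
      proof (rule always_eventually, rule allI)
        fix h show "norm (F h x) \<le> \<bar>g j x\<bar> * x^2 / 2 * \<bar>h\<bar>"
        proof (cases "h = 0")
          case True then show ?thesis by (simp add: F_def)
        next
          case False
          have "norm (F h x) = \<bar>g j x\<bar> * norm (cis (h * x) - 1 - \<i> * of_real (h * x)) / \<bar>h\<bar>"
            by (simp add: F_def)
          also have "\<dots> \<le> \<bar>g j x\<bar> * ((h * x)^2 / 2) / \<bar>h\<bar>"
            by (intro divide_right_mono mult_left_mono cis_taylor1) auto
          also have "\<dots> = \<bar>g j x\<bar> * x^2 / 2 * \<bar>h\<bar>" using False
            by (simp add: power2_eq_square field_simps abs_mult_self_eq)
          finally show ?thesis .
        qed
      qed
      have "((\<lambda>h. \<bar>g j x\<bar> * x^2 / 2 * \<bar>h\<bar>) \<longlongrightarrow> \<bar>g j x\<bar> * x^2 / 2 * \<bar>0\<bar>) (at 0)"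
        by (intro tendsto_intros)
      then show "((\<lambda>h. \<bar>g j x\<bar> * x^2 / 2 * \<bar>h\<bar>) \<longlongrightarrow> 0) (at 0)" by simp
    qed
  qed
  have "((\<lambda>h. norm (G j (t + h) - G j t - h *\<^sub>R D) / norm h) \<longlongrightarrow> 0) (at 0)"
  proof (rule Lim_null_comparison[OF always_eventually lim])
    show "\<forall>h. norm (norm (G j (t + h) - G j t - h *\<^sub>R D) / norm h) \<le> (LINT x:{0..}|lborel. F h x)"
      using key by simp
  qed
  then show ?thesis
    unfolding has_vector_derivative_def has_derivative_at D_def
    by (simp add: bounded_linear_scaleR_left)
qed

end




context cor2 begin

lemma RS_cis_b: assumes j: "j \<le> n" and b: "b > 0"
  shows "has_RS_integral (\<lambda>x. cis (t * x)) (g j) 0 b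
     (cis (t * b) * of_real (g j b) - of_real (g j 0) - (\<i> * of_real t) * integral {0..b} (\<lambda>y. of_real (g j y) * cis (t * y)))"
proof -
  have "has_RS_integral (\<lambda>x. cis (t * x)) (g j) 0 b
     (cis (t * b) * of_real (g j b) - cis (t * 0) * of_real (g j 0) - integral {0..b} (\<lambda>y. (\<i> * of_real t) * cis (t * y) * of_real (g j y)))"
    by (rule RS_IBP[OF b cis_vderiv]) (auto intro!: continuous_intros intro: continuous_on_subset[OF g_cont])
  moreover have "integral {0..b} (\<lambda>y. \<i> * complex_of_real t * cis (t * y) * complex_of_real (g j y))
        = (\<i> * complex_of_real t) * integral {0..b} (\<lambda>y. complex_of_real (g j y) * cis (t * y))"
    using Henstock_Kurzweil_Integration.integral_mult_right[where c="\<i> * complex_of_real t" and S="{0..b}" and f="\<lambda>y. complex_of_real (g j y) * cis (t * y)"]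
    by (simp add: mult_ac)
  ultimately show ?thesis by simp
qed

lemma decay: assumes n1: "n \<ge> 1"
  shows "\<exists>C. \<forall>t. t \<noteq> 0 \<longrightarrow> norm (G (n - 1) t) \<le> C / \<bar>t\<bar>"
proof -
  define j where "j = n - 1"
  have j: "j \<le> n" by (simp add: j_def)
  obtain Bv where Bv: "\<And>k (x::nat\<Rightarrow>real). (\<forall>i\<le>k. x i \<in> {0..}) \<and> (\<forall>i<k. x i < x (Suc i)) \<Longrightarrow>
        (\<Sum>i<k. \<bar>g j (x (Suc i)) - g j (x i)\<bar>) \<le> Bv"
    using bv[OF j] unfolding bounded_variation_on_def g_def by blast
  obtain Bd where Bd: "\<And>x. x \<ge> 0 \<Longrightarrow> \<bar>g j x\<bar> \<le> Bd" using g_bdd[OF j] by blast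
  have "norm (G j t) \<le> (Bv + 2 * Bd) / \<bar>t\<bar>" if t: "t \<noteq> 0" for t
  proof -
    define I where "I b = integral {0..b} (\<lambda>y. of_real (g j y) * cis (t * y))" for b
    have bnd: "norm ((\<i> * of_real t) * I b) \<le> Bv + 2 * Bd" if b: "b > 0" for b
    proof -
      define V where "V = cis (t * b) * of_real (g j b) - of_real (g j 0) - (\<i> * of_real t) * I b"
      have "norm V \<le> Bv"
      proof (rule RS_bound[OF b])
        show "has_RS_integral (\<lambda>x. cis (t * x)) (g j) 0 b V" unfolding V_def I_def by (rule RS_cis_b[OF j b])
        show "norm (cis (t * x)) \<le> 1" for x by simp
        show "(\<Sum>i<k. \<bar>g j (x (Suc i)) - g j (x i)\<bar>) \<le> Bv" if "\<forall>i\<le>k. x i \<in> {0..b}" "\<forall>i<k. x i < x (Suc i)" for k x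
          by (rule Bv) (use that in auto)
      qed
      have "(\<i> * of_real t) * I b = cis (t * b) * of_real (g j b) - of_real (g j 0) - V" by (simp add: V_def)
      moreover have "norm (cis (t * b) * of_real (g j b) - of_real (g j 0) - V) \<le> norm (cis (t * b) * of_real (g j b) - of_real (g j 0)) + norm V"
        by (rule norm_triangle_ineq4)
      moreover have "norm (cis (t * b) * of_real (g j b) - (of_real (g j 0) :: complex)) \<le> norm (cis (t * b) * of_real (g j b)) + norm (of_real (g j 0) :: complex)"
        by (rule norm_triangle_ineq4)
      ultimately have "norm ((\<i> * of_real t) * I b) \<le> norm (cis (t * b) * of_real (g j b)) + norm (of_real (g j 0) :: complex) + norm V"
        by simp
      also have "\<dots> \<le> Bd + Bd + Bv"
        using Bd[of b] Bd[of 0] b \<open>norm V \<le> Bv\<close> by (simp add: norm_mult)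
      finally show ?thesis by simp
    qed
    have "((\<lambda>b. norm ((\<i> * of_real t) * I b)) \<longlongrightarrow> norm ((\<i> * of_real t) * G j t)) at_top"
      unfolding I_def by (intro tendsto_intros G_lim j)
    then have "norm ((\<i> * of_real t) * G j t) \<le> Bv + 2 * Bd"
    proof (rule tendsto_upperbound)
      show "\<forall>\<^sub>F b in at_top. norm ((\<i> * of_real t) * I b) \<le> Bv + 2 * Bd"
        using eventually_gt_at_top[of "0::real"] by (rule eventually_mono) (rule bnd)
    qed simp
    then have "\<bar>t\<bar> * norm (G j t) \<le> Bv + 2 * Bd" by (simp add: norm_mult)
    then show ?thesis using t by (simp add: field_simps)
  qed
  then show ?thesis unfolding j_def by blast
qed

lemma G_decay: "((\<lambda>t. of_nat n * \<i> ^ n * G (n - 1) t) \<longlongrightarrow> 0) at_infinity"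
proof (cases "n = 0")
  case True then show ?thesis by simp
next
  case False
  then obtain C where C: "\<And>t. t \<noteq> 0 \<Longrightarrow> norm (G (n - 1) t) \<le> C / \<bar>t\<bar>" using decay by force
  have "((\<lambda>t. G (n - 1) t) \<longlongrightarrow> 0) at_infinity"
  proof (rule Lim_null_comparison)
    show "\<forall>\<^sub>F t in at_infinity. norm (G (n - 1) t) \<le> C * norm (inverse t)"
      unfolding eventually_at_infinity
    proof (rule exI[of _ 1], intro allI impI)
      fix x :: real assume "1 \<le> norm x"
      then have "x \<noteq> 0" by auto
      from C[OF this] show "norm (G (n - 1) x) \<le> C * norm (inverse x)" by (simp add: divide_inverse)
    qed
    have "((\<lambda>t::real. C * norm (inverse t)) \<longlongrightarrow> C * norm (0::real)) at_infinity"
      by (intro tendsto_intros tendsto_inverse_0)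
    then show "((\<lambda>t::real. C * norm (inverse t)) \<longlongrightarrow> 0) at_infinity" by simp
  qed
  then show ?thesis by (intro tendsto_mult_right_zero)
qed

lemma Phin_Psi:
  "RS_integral_0_inf (\<lambda>x. (\<i> * of_real x) ^ n * cis (t * x)) \<phi>
     = \<i> ^ n * RS_integral_0_inf (\<lambda>x. cis (t * x)) (\<lambda>x. x ^ n * \<phi> x) - of_nat n * \<i> ^ n * G (n - 1) t"
proof (cases "n = 0")
  case True then show ?thesis by simp
next
  case False
  have "RS_integral_0_inf (\<lambda>x. cis (t * x)) (\<lambda>x. x ^ n * \<phi> x) = - of_real (g n 0) - \<i> * of_real t * G n t"
    using cis_RS[of n t] by (simp add: g_def[abs_def])
  moreover have "g n 0 = 0" using False by (simp add: g_def)
  ultimately show ?thesis using Phin_RS[of t] False by (simp add: algebra_simps)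
qed

end


theorem corollary2:
  fixes n :: nat and \<phi> :: "real \<Rightarrow> real"
  assumes cont: "continuous_on {0..} \<phi>"
    and bv: "\<And>m. m \<le> n \<Longrightarrow> bounded_variation_on {0..} (\<lambda>x. x ^ m * \<phi> x)"
    and little_o: "\<phi> \<in> o[at_top](\<lambda>x. 1 / x ^ n)"
    and L1: "set_integrable lborel {0<..} (\<lambda>x. x ^ n * \<phi> x)"
  defines "\<Phi> \<equiv> (\<lambda>t. RS_integral_0_inf (\<lambda>x. cis (t * x)) \<phi>)"
    and "\<Phi>n \<equiv> (\<lambda>t. RS_integral_0_inf (\<lambda>x. (\<i> * of_real x) ^ n * cis (t * x)) \<phi>)"
    and "\<Psi> \<equiv> (\<lambda>t. RS_integral_0_inf (\<lambda>x. cis (t * x)) (\<lambda>x. x ^ n * \<phi> x))"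
  shows "(\<exists>D :: nat \<Rightarrow> real \<Rightarrow> complex.
            D 0 = \<Phi> \<and>
            (\<forall>k<n. \<forall>t>0. (D k has_vector_derivative D (Suc k) t) (at t)) \<and>
            (\<forall>t>0. D n t = \<Phi>n t))
         \<and> ((\<Phi>n \<longlongrightarrow> 0) at_infinity \<longleftrightarrow> (\<exists>L. (\<Psi> \<longlongrightarrow> L) at_infinity))"
proof -
  interpret cor2 n \<phi> using cont bv little_o L1 by unfold_locales auto
  define D where "D k t = - (if k = 0 then of_real (\<phi> 0) else 0) - \<i> ^ Suc k * (of_real t * G k t) - of_nat k * \<i> ^ k * G (k - 1) t" for k t
  have g0: "g 0 = \<phi>" by (simp add: g_def[abs_def])
  have gn: "g n = (\<lambda>x. x ^ n * \<phi> x)" by (simp add: g_def[abs_def])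
  have Psi: "\<Psi> t = - of_real (g n 0) - \<i> * of_real t * G n t" for t
    unfolding \<Psi>_def using cis_RS[of n t] gn by simp
  have PP: "\<Phi>n t = \<i> ^ n * \<Psi> t - of_nat n * \<i> ^ n * G (n - 1) t" for t
    unfolding \<Phi>n_def \<Psi>_def by (rule Phin_Psi)
  have part1: "\<exists>D :: nat \<Rightarrow> real \<Rightarrow> complex. D 0 = \<Phi> \<and>
            (\<forall>k<n. \<forall>t>0. (D k has_vector_derivative D (Suc k) t) (at t)) \<and> (\<forall>t>0. D n t = \<Phi>n t)"
  proof (intro exI[of _ D] conjI allI impI)
    show "D 0 = \<Phi>"
    proof
      fix t show "D 0 t = \<Phi> t"
        unfolding \<Phi>_def D_def using cis_RS[of 0 t] g0 by simp
    qed
  next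
    fix k :: nat and t :: real assume k: "k < n" and "t > 0"
    have dk: "(G k has_vector_derivative \<i> * G (Suc k) t) (at t)" by (rule G_deriv[OF k])
    have dk1: "(G (k - 1) has_vector_derivative \<i> * G (Suc (k - 1)) t) (at t)" by (rule G_deriv) (use k in simp)
    have dm: "((\<lambda>t. of_real t * G k t) has_vector_derivative (of_real t * (\<i> * G (Suc k) t) + of_real 1 * G k t)) (at t)"
      by (rule has_vector_derivative_mult[OF has_vector_derivative_of_real[OF DERIV_ident] dk])
    have "(D k has_vector_derivative (0 - \<i> ^ Suc k * (of_real t * (\<i> * G (Suc k) t) + of_real 1 * G k t) - of_nat k * \<i> ^ k * (\<i> * G (Suc (k - 1)) t))) (at t)"
      unfolding D_def[abs_def]
      by (intro has_vector_derivative_diff has_vector_derivative_const has_vector_derivative_mult_right dm dk1)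
    moreover have "(0 - \<i> ^ Suc k * (of_real t * (\<i> * G (Suc k) t) + of_real 1 * G k t) - of_nat k * \<i> ^ k * (\<i> * G (Suc (k - 1)) t)) = D (Suc k) t"
    proof (cases k)
      case 0 then show ?thesis by (simp add: D_def algebra_simps)
    next
      case (Suc m) then show ?thesis by (simp add: D_def algebra_simps)
    qed
    ultimately show "(D k has_vector_derivative D (Suc k) t) (at t)" by simp
  next
    fix t :: real assume "t > 0"
    show "D n t = \<Phi>n t"
    proof (cases "n = 0")
      case True then show ?thesis unfolding PP Psi D_def by (simp add: g_def)
    next
      case False then show ?thesis unfolding PP Psi D_def by (simp add: g_def algebra_simps)
    qed
  qed
  have part2: "(\<Phi>n \<longlongrightarrow> 0) at_infinity \<longleftrightarrow> (\<exists>L. (\<Psi> \<longlongrightarrow> L) at_infinity)"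
  proof
    assume H: "(\<Phi>n \<longlongrightarrow> 0) at_infinity"
    have "\<Psi> = (\<lambda>t. (\<Phi>n t + of_nat n * \<i> ^ n * G (n - 1) t) / \<i> ^ n)"
      by (rule ext) (simp add: PP)
    moreover have "((\<lambda>t. (\<Phi>n t + of_nat n * \<i> ^ n * G (n - 1) t) / \<i> ^ n) \<longlongrightarrow> (0 + 0) / \<i> ^ n) at_infinity"
      by (intro tendsto_intros H G_decay) simp
    ultimately show "\<exists>L. (\<Psi> \<longlongrightarrow> L) at_infinity" by auto
  next
    assume "\<exists>L. (\<Psi> \<longlongrightarrow> L) at_infinity"
    then obtain L where L: "(\<Psi> \<longlongrightarrow> L) at_infinity" by blast
    have Lt: "(\<Psi> \<longlongrightarrow> L) at_top" by (rule filterlim_mono[OF L order_refl at_top_le_at_infinity])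
    obtain B where B: "\<forall>x\<ge>0. \<bar>g n x\<bar> \<le> B" using g_bdd[of n] by auto
    have "L = 0"
    proof (rule abel_zero[of "g n" B])
      show "continuous_on {0..} (g n)" by (rule g_cont)
      show "\<bar>g n x\<bar> \<le> B" if "x \<ge> 0" for x using B that by auto
      show "set_integrable lborel {0..} (g n)" by (rule g_int) simp
      show "((\<lambda>t. - of_real (g n 0) - \<i> * of_real t * (LINT x:{0..}|lborel. of_real (g n x) * cis (t * x))) \<longlongrightarrow> L) at_top"
        using Lt unfolding Psi G_def[symmetric] by simp
    qed
    have "\<Phi>n = (\<lambda>t. \<i> ^ n * \<Psi> t - of_nat n * \<i> ^ n * G (n - 1) t)" by (rule ext) (rule PP)
    moreover have "((\<lambda>t. \<i> ^ n * \<Psi> t - of_nat n * \<i> ^ n * G (n - 1) t) \<longlongrightarrow> \<i> ^ n * L - 0) at_infinity"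
      by (intro tendsto_intros L G_decay)
    ultimately show "(\<Phi>n \<longlongrightarrow> 0) at_infinity" using \<open>L = 0\<close> by simp
  qed
  show ?thesis using part1 part2 by blast
qed


end
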